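(* Let $\beta\in B_n$ and let $p$ be an innermost point of the closure diagram of $\beta$. Then $\kappa(\beta)\le\kappa(S^p\beta)\le\kappa(\beta)+2$.
   Context: Work over $\mathbb{Z}/2$ with the Khovanov chain complex $\mathrm{CKh}$ of a link diagram (cube of resolutions, circles labeled $v_\pm$, Khovanov's merge/split differential). For $\beta\in B_n$ with closure $\bar\beta$ drawn around the braid axis, a circle in a resolution is nontrivial if it winds an odd number of times around the axis, trivial otherwise. The $k$-grading of a canonical generator is (number of nontrivial circles labeled $v_+$) minus (number of nontrivial circles labeled $v_-$); the differential does not increase $k$, so $\mathcal{F}_i=\mathrm{span}\{x:k(x)\le i\}$ are subcomplexes. The braidlike resolution ($0$-resolve positive, $1$-resolve negative crossings) has $n$ nontrivial circles; $\psi(\bar\beta)$ labels all of them $v_-$. Define $\kappa(\beta)=n+\min\{i:\psi(\bar\beta)=dy,\ y\in\mathcal{F}_i\}$ if $\psi(\bar\beta)$ is a boundary, $\kappa(\beta)=\infty$ otherwise. An arc of a closed braid diagram is a segment running from one crossing to another without passing through other crossings; it is innermost if every point on it can be joined to the braid axis by a straight segment meeting no other arcs; an innermost point is a point on an innermost arc. $S^p\beta\in B_{n+1}$ denotes the positive stabilization of $\beta$ obtained by inserting a crossing $\sigma_n$ at the innermost point $p$. *)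

theory Defs
  imports Main "HOL-Library.Extended_Real"
begin

text \<open>A braid word is a list of letters (i, s): the letter is the generator
  sigma_i if s = True and sigma_i inverse if s = False.  A letter sigma_i
  acts on the strand positions i and i+1 (positions are 1..n).  Position n is
  the position closest to the braid axis (this is the side on which the
  positive stabilization sigma_n adds the new strand n+1).\<close>

type_synonym bword = "(nat \<times> bool) list"

definition braid_word :: "nat \<Rightarrow> bword \<Rightarrow> bool" where
  "braid_word n w \<longleftrightarrow> 1 \<le> n \<and> (\<forall>(i, s) \<in> set w. 1 \<le> i \<and> i < n)"

text \<open>Segments of the closed braid diagram: (j, p) is the piece of strand at
  position p in gap j, i.e. just after letter j-1 and just before letter j
  (0 \<le> j \<le> length w); gap length w is glued to gap 0 by the closure.\<close>

type_synonym seg = "nat \<times> nat"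

definition segs :: "nat \<Rightarrow> bword \<Rightarrow> seg set" where
  "segs n w = {0..length w} \<times> {1..n}"

text \<open>A resolution is the set r of crossings (letter indices) that are
  1-resolved.  Crossing j is smoothed in the braidlike (oriented) way iff it is
  0-resolved and positive, or 1-resolved and negative.\<close>

definition braidlike_smoothed :: "bword \<Rightarrow> nat set \<Rightarrow> nat \<Rightarrow> bool" where
  "braidlike_smoothed w r j \<longleftrightarrow> ((j \<in> r) \<longleftrightarrow> \<not> snd (w ! j))"

definition edges :: "nat \<Rightarrow> bword \<Rightarrow> nat set \<Rightarrow> (seg \<times> seg) set" where
  "edges n w r =
     {((length w, p), (0, p)) | p. p \<in> {1..n}}
   \<union> {((j, p), (Suc j, p)) | j p. j < length w \<and> p \<in> {1..n}
        \<and> p \<noteq> fst (w ! j) \<and> p \<noteq> Suc (fst (w ! j))}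
   \<union> {((j, p), (Suc j, p)) | j p. j < length w \<and> braidlike_smoothed w r j
        \<and> (p = fst (w ! j) \<or> p = Suc (fst (w ! j)))}
   \<union> {((j, fst (w ! j)), (j, Suc (fst (w ! j)))) | j. j < length w \<and> \<not> braidlike_smoothed w r j}
   \<union> {((Suc j, fst (w ! j)), (Suc j, Suc (fst (w ! j)))) | j. j < length w \<and> \<not> braidlike_smoothed w r j}"

definition circles :: "nat \<Rightarrow> bword \<Rightarrow> nat set \<Rightarrow> seg set set" where
  "circles n w r =
     {{y. (x, y) \<in> (edges n w r \<union> (edges n w r)\<inverse>)\<^sup>*} | x. x \<in> segs n w}"

text \<open>A circle winds an odd number of times around the axis iff it meets the
  ray through gap 0 an odd number of times.\<close>

definition nontrivial :: "seg set \<Rightarrow> bool" where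
  "nontrivial C \<longleftrightarrow> odd (card {p. (0, p) \<in> C})"

text \<open>Canonical generators: (r, P) with r a resolution and P the set of circles
  of r labeled v+ (all other circles labeled v-).  Chains are finite sets of
  generators (sums over Z/2).\<close>

type_synonym kgen = "nat set \<times> seg set set"

definition gens :: "nat \<Rightarrow> bword \<Rightarrow> kgen set" where
  "gens n w = {(r, P). r \<subseteq> {..<length w} \<and> P \<subseteq> circles n w r}"

definition kgr :: "nat \<Rightarrow> bword \<Rightarrow> kgen \<Rightarrow> int" where
  "kgr n w x = int (card {C \<in> snd x. nontrivial C})
              - int (card {C \<in> circles n w (fst x) - snd x. nontrivial C})"

text \<open>Coefficient of the edge map from (r,P) to (r',Q), r' = r plus one crossing:
  Khovanov's merge m(v+ v+) = v+, m(v+ v-) = m(v- v+) = v-, m(v- v-) = 0 and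
  split D(v+) = v+ v- + v- v+, D(v-) = v- v-, identity on unchanged circles.\<close>

definition kh_coeff :: "nat \<Rightarrow> bword \<Rightarrow> kgen \<Rightarrow> kgen \<Rightarrow> bool" where
  "kh_coeff n w x y =
    (let r = fst x; P = snd x; r' = fst y; Q = snd y;
         A = circles n w r - circles n w r'; B = circles n w r' - circles n w r in
     (\<forall>C \<in> circles n w r \<inter> circles n w r'. C \<in> P \<longleftrightarrow> C \<in> Q) \<and>
     ((\<exists>a1 a2 b. a1 \<noteq> a2 \<and> A = {a1, a2} \<and> B = {b} \<and>
         ((a1 \<in> P \<and> a2 \<in> P \<and> b \<in> Q) \<or> ((a1 \<in> P) \<noteq> (a2 \<in> P) \<and> b \<notin> Q)))
      \<or>
      (\<exists>a b1 b2. b1 \<noteq> b2 \<and> A = {a} \<and> B = {b1, b2} \<and>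
         ((a \<in> P \<and> (b1 \<in> Q) \<noteq> (b2 \<in> Q)) \<or> (a \<notin> P \<and> b1 \<notin> Q \<and> b2 \<notin> Q)))))"

definition kd :: "nat \<Rightarrow> bword \<Rightarrow> kgen \<Rightarrow> kgen set" where
  "kd n w x = {y \<in> gens n w. \<exists>c < length w. c \<notin> fst x \<and> fst y = insert c (fst x)
                                 \<and> kh_coeff n w x y}"

definition kd_chain :: "nat \<Rightarrow> bword \<Rightarrow> kgen set \<Rightarrow> kgen set" where
  "kd_chain n w X = {y. odd (card {x \<in> X. y \<in> kd n w x})}"

definition filt :: "nat \<Rightarrow> bword \<Rightarrow> int \<Rightarrow> kgen set set" where
  "filt n w i = {X. finite X \<and> X \<subseteq> gens n w \<and> (\<forall>x \<in> X. kgr n w x \<le> i)}"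

text \<open>psi: braidlike resolution, all (nontrivial) circles labeled v-.\<close>

definition psi :: "bword \<Rightarrow> kgen" where
  "psi w = ({j. j < length w \<and> \<not> snd (w ! j)}, {})"

definition kappa :: "nat \<Rightarrow> bword \<Rightarrow> ereal" where
  "kappa n w =
     (if \<exists>i. \<exists>X \<in> filt n w i. kd_chain n w X = {psi w}
      then ereal (real_of_int (int n + (LEAST i. \<exists>X \<in> filt n w i. kd_chain n w X = {psi w})))
      else \<infinity>)"

text \<open>Points on arcs of the closure diagram are represented by segments (j,p);
  the innermost ones are exactly those at position n (closest to the axis).\<close>

definition innermost_point :: "nat \<Rightarrow> bword \<Rightarrow> seg \<Rightarrow> bool" where
  "innermost_point n w q \<longleftrightarrow> q \<in> segs n w \<and> snd q = n"

definition stabilize :: "nat \<Rightarrow> bword \<Rightarrow> seg \<Rightarrow> bword" where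
  "stabilize n w q = take (fst q) w @ [(n, True)] @ drop (fst q) w"

end

theory Submission
  imports Defs
begin

definition RR :: "('a \<times> 'a) set \<Rightarrow> ('a \<times> 'a) set" where
  "RR E = (E \<union> E\<inverse>)\<^sup>*"

definition ccomp :: "('a \<times> 'a) set \<Rightarrow> 'a \<Rightarrow> 'a set" where
  "ccomp E x = {y. (x, y) \<in> RR E}"

lemma RR_refl[simp]: "(x,x) \<in> RR E" by (simp add: RR_def)
lemma RR_sym: "(x,y) \<in> RR E \<Longrightarrow> (y,x) \<in> RR E"
  unfolding RR_def by (metis converse_Un converse_converse converse_iff rtrancl_converseI sup_commute)
lemma RR_trans: "(x,y) \<in> RR E \<Longrightarrow> (y,z) \<in> RR E \<Longrightarrow> (x,z) \<in> RR E"
  unfolding RR_def by (rule rtrancl_trans)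
lemma RR_edge: "(x,y) \<in> E \<Longrightarrow> (x,y) \<in> RR E"
  unfolding RR_def by auto
lemma RR_edge': "(x,y) \<in> E \<Longrightarrow> (y,x) \<in> RR E"
  unfolding RR_def by auto

lemma RR_dom: assumes "E \<subseteq> D \<times> D" "(a,b) \<in> RR E" "a \<in> D" shows "b \<in> D"
  using assms(2,3) unfolding RR_def
  by (induction rule: rtrancl_induct) (use assms(1) in auto)

lemma comp_circles_eq: "circles n w r = {ccomp (edges n w r) x | x. x \<in> segs n w}"
  unfolding circles_def ccomp_def RR_def ..

lemma hom_conn:
  assumes ED: "E' \<subseteq> D \<times> D"
    and i: "\<And>a b. (a,b) \<in> E' \<Longrightarrow> \<phi> a = \<phi> b \<or> (\<phi> a, \<phi> b) \<in> E \<union> E\<inverse>"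
    and ii: "\<And>u v. (u,v) \<in> E \<Longrightarrow> \<exists>a\<in>D. \<exists>b\<in>D. \<phi> a = u \<and> \<phi> b = v \<and> (a,b) \<in> RR E'"
    and iii: "\<And>a b. a \<in> D \<Longrightarrow> b \<in> D \<Longrightarrow> \<phi> a = \<phi> b \<Longrightarrow> (a,b) \<in> RR E'"
    and a: "a \<in> D" and b: "b \<in> D"
  shows "(a,b) \<in> RR E' \<longleftrightarrow> (\<phi> a, \<phi> b) \<in> RR E"
proof
  assume "(a,b) \<in> RR E'"
  then show "(\<phi> a, \<phi> b) \<in> RR E" unfolding RR_def
  proof (induction rule: rtrancl_induct)
    case base then show ?case by simp
  next
    case (step y z)
    from step(2) have "\<phi> y = \<phi> z \<or> (\<phi> y, \<phi> z) \<in> E \<union> E\<inverse>" using i[of y z] i[of z y] by auto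
    then show ?case
    proof
      assume "\<phi> y = \<phi> z" then show ?thesis using step(3) by simp
    next
      assume "(\<phi> y, \<phi> z) \<in> E \<union> E\<inverse>"
      then show ?thesis using step(3) by (rule rtrancl.rtrancl_into_rtrancl[rotated])
    qed
  qed
next
  assume h: "(\<phi> a, \<phi> b) \<in> RR E"
  have key: "(\<phi> a, v) \<in> (E \<union> E\<inverse>)\<^sup>* \<Longrightarrow> b' \<in> D \<Longrightarrow> \<phi> b' = v \<Longrightarrow> (a,b') \<in> RR E'" for v b'
  proof (induction arbitrary: b' rule: rtrancl_induct)
    case base then show ?case using iii[OF a, of b'] by simp
  next
    case (step u v b')
    obtain a1 b1 where ab: "a1 \<in> D" "b1 \<in> D" "\<phi> a1 = u" "\<phi> b1 = v" "(a1,b1) \<in> RR E'"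
    proof (cases "(u,v) \<in> E")
      case True
      from ii[OF True] obtain a1 b1 where "a1 \<in> D" "b1 \<in> D" "\<phi> a1 = u" "\<phi> b1 = v" "(a1,b1) \<in> RR E'"
        by blast
      then show ?thesis by (rule that)
    next
      case False
      then have "(v,u) \<in> E" using step(2) by blast
      from ii[OF this] obtain a0 b0 where "a0 \<in> D" "b0 \<in> D" "\<phi> a0 = v" "\<phi> b0 = u" "(a0,b0) \<in> RR E'"
        by blast
      then show ?thesis using that[of b0 a0] RR_sym[of a0 b0 E'] by simp
    qed
    have "(a,a1) \<in> RR E'" using step(3)[OF ab(1) ab(3)] .
    moreover have "(b1,b') \<in> RR E'" using iii[OF ab(2) step(4)] ab(4) step(5) by simp
    ultimately show ?case using ab(5) RR_trans by metis
  qed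
  show "(a,b) \<in> RR E'" using key[of "\<phi> b" b] h b unfolding RR_def by blast
qed

lemma hom_comp:
  assumes ED: "E' \<subseteq> D \<times> D"
    and i: "\<And>a b. (a,b) \<in> E' \<Longrightarrow> \<phi> a = \<phi> b \<or> (\<phi> a, \<phi> b) \<in> E \<union> E\<inverse>"
    and ii: "\<And>u v. (u,v) \<in> E \<Longrightarrow> \<exists>a\<in>D. \<exists>b\<in>D. \<phi> a = u \<and> \<phi> b = v \<and> (a,b) \<in> RR E'"
    and iii: "\<And>a b. a \<in> D \<Longrightarrow> b \<in> D \<Longrightarrow> \<phi> a = \<phi> b \<Longrightarrow> (a,b) \<in> RR E'"
    and a: "a \<in> D"
  shows "ccomp E' a = {b \<in> D. \<phi> b \<in> ccomp E (\<phi> a)}"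
  unfolding ccomp_def using hom_conn[OF assms] RR_dom[OF ED _ a] by blast

lemma hom_circles:
  assumes ED: "E' \<subseteq> D \<times> D"
    and i: "\<And>a b. (a,b) \<in> E' \<Longrightarrow> \<phi> a = \<phi> b \<or> (\<phi> a, \<phi> b) \<in> E \<union> E\<inverse>"
    and ii: "\<And>u v. (u,v) \<in> E \<Longrightarrow> \<exists>a\<in>D. \<exists>b\<in>D. \<phi> a = u \<and> \<phi> b = v \<and> (a,b) \<in> RR E'"
    and iii: "\<And>a b. a \<in> D \<Longrightarrow> b \<in> D \<Longrightarrow> \<phi> a = \<phi> b \<Longrightarrow> (a,b) \<in> RR E'"
  shows "{ccomp E' a | a. a \<in> D} = (\<lambda>C. {b \<in> D. \<phi> b \<in> C}) ` {ccomp E u | u. u \<in> \<phi> ` D}"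
  using hom_comp[OF assms] by blast

lemma comp_isolated: "x \<notin> Domain E \<Longrightarrow> x \<notin> Range E \<Longrightarrow> ccomp E x = {x}"
proof -
  assume "x \<notin> Domain E" "x \<notin> Range E"
  have "(x,y) \<in> RR E \<Longrightarrow> y = x" for y
    unfolding RR_def
    by (induction rule: rtrancl_induct) (use \<open>x \<notin> Domain E\<close> \<open>x \<notin> Range E\<close> in auto)
  then show ?thesis unfolding ccomp_def by auto
qed


lemma edgesE:
  assumes "(x,y) \<in> edges n w r"
  obtains (cl) p where "p \<in> {1..n}" "x = (length w,p)" "y = (0,p)"
  | (pass) j p where "j < length w" "p \<in> {1..n}" "p \<noteq> fst (w!j)" "p \<noteq> Suc (fst (w!j))" "x = (j,p)" "y = (Suc j,p)"
  | (bl) j p where "j < length w" "braidlike_smoothed w r j" "p = fst (w!j) \<or> p = Suc (fst (w!j))" "x = (j,p)" "y = (Suc j,p)"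
  | (nb0) j where "j < length w" "\<not> braidlike_smoothed w r j" "x = (j, fst (w!j))" "y = (j, Suc (fst (w!j)))"
  | (nb1) j where "j < length w" "\<not> braidlike_smoothed w r j" "x = (Suc j, fst (w!j))" "y = (Suc j, Suc (fst (w!j)))"
  using assms unfolding edges_def
  apply (elim UnE CollectE exE conjE)
  apply (simp_all only: prod.inject)
  apply (elim conjE)
  apply blast+
  done

lemma edges_cl: "p \<in> {1..n} \<Longrightarrow> ((length w,p),(0,p)) \<in> edges n w r"
  unfolding edges_def by (intro UnI1) auto
lemma edges_pass: "j < length w \<Longrightarrow> p \<in> {1..n} \<Longrightarrow> p \<noteq> fst (w!j) \<Longrightarrow> p \<noteq> Suc (fst (w!j)) \<Longrightarrow> ((j,p),(Suc j,p)) \<in> edges n w r"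
  unfolding edges_def apply (rule UnI1, rule UnI1, rule UnI1, rule UnI2) by auto
lemma edges_bl: "j < length w \<Longrightarrow> braidlike_smoothed w r j \<Longrightarrow> p = fst (w!j) \<or> p = Suc (fst (w!j)) \<Longrightarrow> ((j,p),(Suc j,p)) \<in> edges n w r"
  unfolding edges_def apply (rule UnI1, rule UnI1, rule UnI2) by auto
lemma edges_nb0: "j < length w \<Longrightarrow> \<not> braidlike_smoothed w r j \<Longrightarrow> ((j, fst (w!j)),(j, Suc (fst (w!j)))) \<in> edges n w r"
  unfolding edges_def apply (rule UnI1, rule UnI2) by auto
lemma edges_nb1: "j < length w \<Longrightarrow> \<not> braidlike_smoothed w r j \<Longrightarrow> ((Suc j, fst (w!j)),(Suc j, Suc (fst (w!j)))) \<in> edges n w r"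
  unfolding edges_def apply (rule UnI2) by auto

definition letters_ok :: "nat \<Rightarrow> bword \<Rightarrow> bool" where
  "letters_ok n w \<longleftrightarrow> (\<forall>j < length w. 1 \<le> fst (w!j) \<and> fst (w!j) < n)"

lemma braid_word_letters: "braid_word n w \<Longrightarrow> letters_ok n w"
  unfolding braid_word_def letters_ok_def
  by (metis (mono_tags, lifting) case_prodD nth_mem prod.collapse)

lemma edges_segs: assumes "letters_ok n w" shows "edges n w r \<subseteq> segs n w \<times> segs n w"
proof
  fix z assume "z \<in> edges n w r"
  then obtain x y where z: "z = (x,y)" "(x,y) \<in> edges n w r" by (cases z) auto
  from z(2) show "z \<in> segs n w \<times> segs n w"
    by (cases rule: edgesE) (use assms z(1) in \<open>auto simp: segs_def letters_ok_def\<close>)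
qed

lemma chain_RR:
  assumes "\<And>j. j1 \<le> j \<Longrightarrow> j < j2 \<Longrightarrow> ((j,p),(Suc j,p)) \<in> E" "j1 \<le> j2"
  shows "((j1,p),(j2,p)) \<in> RR E"
  using assms
proof (induction j2)
  case 0 then show ?case by simp
next
  case (Suc k)
  show ?case
  proof (cases "j1 = Suc k")
    case True then show ?thesis by simp
  next
    case False
    then have "((j1,p),(k,p)) \<in> RR E" using Suc by auto
    moreover have "((k,p),(Suc k,p)) \<in> E" using Suc False by auto
    ultimately show ?thesis using RR_trans RR_edge by metis
  qed
qed

locale stab =
  fixes n :: nat and w :: bword and q :: nat
  assumes bw: "braid_word n w" and qL: "q \<le> length w"
begin

definition w' :: bword where "w' = take q w @ [(n,True)] @ drop q w"
definition sh :: "nat \<Rightarrow> nat" where "sh j = (if j < q then j else Suc j)"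
definition g :: "nat \<Rightarrow> nat" where "g j = (if j \<le> q then j else j - 1)"
definition rr :: "nat set \<Rightarrow> bool \<Rightarrow> nat set" where
  "rr r b = sh ` r \<union> (if b then {q} else {})"
definition phi :: "bool \<Rightarrow> seg \<Rightarrow> seg" where
  "phi b s = (if snd s = Suc n then (if b then (q,n) else (0,Suc n)) else (g (fst s), snd s))"
definition D' :: "seg set" where "D' = segs (Suc n) w'"
definition pre :: "bool \<Rightarrow> seg set \<Rightarrow> seg set" where
  "pre b C = {s \<in> D'. phi b s \<in> C}"

lemma n1: "1 \<le> n" using bw by (simp add: braid_word_def)
lemma lok: "letters_ok n w" using bw by (rule braid_word_letters)

lemma len': "length w' = Suc (length w)"
  using qL by (simp add: w'_def)

lemma nth_sh: "j < length w \<Longrightarrow> w' ! sh j = w ! j"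
  using qL by (auto simp: w'_def sh_def nth_append min_def)

lemma nth_q: "w' ! q = (n, True)"
  using qL by (auto simp: w'_def nth_append min_def)

lemma idx_cases: "j' < Suc (length w) \<Longrightarrow> j' = q \<or> (\<exists>j < length w. j' = sh j)"
proof -
  assume a: "j' < Suc (length w)"
  show ?thesis
  proof (cases "j' < q")
    case True then have "j' < length w \<and> j' = sh j'" using qL by (simp add: sh_def)
    then show ?thesis by blast
  next
    case False
    show ?thesis
    proof (cases "j' = q")
      case False': False
      with False a have "j' - 1 < length w \<and> j' = sh (j' - 1)" by (auto simp: sh_def)
      then show ?thesis by blast
    qed simp
  qed
qed

lemma sh_inj: "sh i = sh j \<longleftrightarrow> i = j" by (auto simp: sh_def)
lemma sh_ne_q: "sh j \<noteq> q" by (auto simp: sh_def)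
lemma sh_ne_q': "q \<noteq> sh j" by (auto simp: sh_def)
lemma g_sh: "g (sh j) = j" by (auto simp: sh_def g_def)
lemma g_Suc_sh: "g (Suc (sh j)) = Suc j" by (auto simp: sh_def g_def)
lemma sh_lt: "j < length w \<Longrightarrow> sh j < Suc (length w)" using qL by (auto simp: sh_def)

lemma lok': "letters_ok (Suc n) w'"
  unfolding letters_ok_def len'
proof (intro allI impI)
  fix j' assume "j' < Suc (length w)"
  then consider "j' = q" | j where "j < length w" "j' = sh j" using idx_cases by blast
  then show "1 \<le> fst (w' ! j') \<and> fst (w' ! j') < Suc n"
  proof cases
    case 1 then show ?thesis using n1 by (simp add: nth_q)
  next
    case 2 then show ?thesis using lok by (auto simp: nth_sh letters_ok_def)
  qed
qed

lemma bs_sh: "j < length w \<Longrightarrow> braidlike_smoothed w' (rr r b) (sh j) = braidlike_smoothed w r j"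
  by (auto simp: braidlike_smoothed_def rr_def nth_sh sh_inj sh_ne_q)

lemma bs_q: "braidlike_smoothed w' (rr r b) q \<longleftrightarrow> \<not> b"
  by (auto simp: braidlike_smoothed_def rr_def nth_q sh_ne_q sh_ne_q')

lemma E'_D: "edges (Suc n) w' r' \<subseteq> D' \<times> D'"
  unfolding D'_def by (rule edges_segs[OF lok'])

lemma phi_low: "p \<noteq> Suc n \<Longrightarrow> phi b (j,p) = (g j, p)" by (simp add: phi_def)
lemma phi_high: "phi b (j,Suc n) = (if b then (q,n) else (0,Suc n))" by (simp add: phi_def)
lemma g_q: "g q = q" and g_Suc_q: "g (Suc q) = q" and g_SucL: "g (Suc (length w)) = length w"
  using qL by (auto simp: g_def)

lemma g_0[simp]: "g 0 = 0" by (simp add: g_def)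

lemma lt_n: "j < length w \<Longrightarrow> fst (w!j) < n" "j < length w \<Longrightarrow> 1 \<le> fst (w!j)"
  using lok by (auto simp: letters_ok_def)

lemma cond_i:
  assumes "(a,c) \<in> edges (Suc n) w' (rr r b)"
  shows "phi b a = phi b c \<or> (phi b a, phi b c) \<in> edges n w r \<union> (edges n w r)\<inverse>"
  using assms
proof (cases rule: edgesE)
  case (cl p)
  show ?thesis
  proof (cases "p = Suc n")
    case True then show ?thesis using cl by (simp add: phi_def)
  next
    case False
    then have "p \<in> {1..n}" using cl by auto
    then have "((length w, p), (0,p)) \<in> edges n w r" by (rule edges_cl)
    then show ?thesis using cl False by (simp add: phi_low len' g_SucL)
  qed
next
  case (pass j' p)
  from pass(1) len' consider "j' = q" | j where "j < length w" "j' = sh j" using idx_cases by auto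
  then show ?thesis
  proof cases
    case 1
    then have "p \<noteq> Suc n" using pass by (simp add: nth_q)
    then show ?thesis using pass 1 by (simp add: phi_low g_q g_Suc_q)
  next
    case 2
    show ?thesis
    proof (cases "p = Suc n")
      case True then show ?thesis using pass by (simp add: phi_def)
    next
      case False
      then have "((j,p),(Suc j,p)) \<in> edges n w r"
        using pass 2 by (intro edges_pass) (auto simp: nth_sh)
      then show ?thesis using pass 2 False by (simp add: phi_low g_sh g_Suc_sh)
    qed
  qed
next
  case (bl j' p)
  from bl(1) len' consider "j' = q" | j where "j < length w" "j' = sh j" using idx_cases by auto
  then show ?thesis
  proof cases
    case 1
    then have "p = n \<or> p = Suc n" using bl by (simp add: nth_q)
    then show ?thesis using bl 1 n1 by (auto simp: phi_def g_q g_Suc_q)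
  next
    case 2
    have pn: "p \<noteq> Suc n" using bl 2 lt_n[of j] by (auto simp: nth_sh)
    have "((j,p),(Suc j,p)) \<in> edges n w r"
      using bl 2 by (intro edges_bl) (auto simp: nth_sh bs_sh)
    then show ?thesis using bl 2 pn by (simp add: phi_low g_sh g_Suc_sh)
  qed
next
  case (nb0 j')
  from nb0(1) len' consider "j' = q" | j where "j < length w" "j' = sh j" using idx_cases by auto
  then show ?thesis
  proof cases
    case 1
    then have "b" using nb0 bs_q by auto
    then show ?thesis using nb0 1 by (simp add: phi_def nth_q g_q)
  next
    case 2
    have pn: "fst (w!j) \<noteq> Suc n" "Suc (fst (w!j)) \<noteq> Suc n" using 2 lt_n[of j] by auto
    have "((j,fst (w!j)),(j,Suc (fst (w!j)))) \<in> edges n w r"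
      using nb0 2 by (intro edges_nb0) (auto simp: bs_sh)
    then show ?thesis using nb0 2 pn by (simp add: phi_low g_sh nth_sh)
  qed
next
  case (nb1 j')
  from nb1(1) len' consider "j' = q" | j where "j < length w" "j' = sh j" using idx_cases by auto
  then show ?thesis
  proof cases
    case 1
    then have "b" using nb1 bs_q by auto
    then show ?thesis using nb1 1 by (simp add: phi_def nth_q g_Suc_q)
  next
    case 2
    have pn: "fst (w!j) \<noteq> Suc n" "Suc (fst (w!j)) \<noteq> Suc n" using 2 lt_n[of j] by auto
    have "((Suc j,fst (w!j)),(Suc j,Suc (fst (w!j)))) \<in> edges n w r"
      using nb1 2 by (intro edges_nb1) (auto simp: bs_sh)
    then show ?thesis using nb1 2 pn by (simp add: phi_low g_Suc_sh nth_sh)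
  qed
qed

lemma lift_edge:
  assumes "(a,c) \<in> edges (Suc n) w' (rr r b)" "phi b a = u" "phi b c = v"
  shows "\<exists>a\<in>D'. \<exists>c\<in>D'. phi b a = u \<and> phi b c = v \<and> (a,c) \<in> RR (edges (Suc n) w' (rr r b))"
proof -
  have "(a,c) \<in> D' \<times> D'" using assms(1) E'_D by blast
  then show ?thesis using assms RR_edge[OF assms(1)] by blast
qed

lemma cond_ii:
  assumes "(u,v) \<in> edges n w r"
  shows "\<exists>a\<in>D'. \<exists>c\<in>D'. phi b a = u \<and> phi b c = v \<and> (a,c) \<in> RR (edges (Suc n) w' (rr r b))"
  using assms
proof (cases rule: edgesE)
  case (cl p)
  have "((length w', p),(0,p)) \<in> edges (Suc n) w' (rr r b)" using cl by (intro edges_cl) auto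
  then show ?thesis using cl by (intro lift_edge) (auto simp: len' phi_low g_SucL)
next
  case (pass j p)
  have "((sh j, p),(Suc (sh j),p)) \<in> edges (Suc n) w' (rr r b)"
    using pass by (intro edges_pass) (auto simp: len' sh_lt nth_sh)
  then show ?thesis using pass by (intro lift_edge) (auto simp: phi_low g_sh g_Suc_sh)
next
  case (bl j p)
  have pn: "p \<noteq> Suc n" using bl lt_n[of j] by auto
  have "((sh j, p),(Suc (sh j),p)) \<in> edges (Suc n) w' (rr r b)"
    using bl by (intro edges_bl) (auto simp: len' sh_lt nth_sh bs_sh)
  then show ?thesis using bl pn lt_n[of j] by (intro lift_edge) (auto simp: phi_low g_sh g_Suc_sh)
next
  case (nb0 j)
  have pn: "fst (w!j) \<noteq> Suc n" "Suc (fst (w!j)) \<noteq> Suc n" using nb0 lt_n[of j] by auto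
  have "((sh j, fst (w'!sh j)),(sh j, Suc (fst (w'!sh j)))) \<in> edges (Suc n) w' (rr r b)"
    using nb0 by (intro edges_nb0) (auto simp: len' sh_lt bs_sh)
  then show ?thesis using nb0 pn by (intro lift_edge) (auto simp: phi_low g_sh nth_sh)
next
  case (nb1 j)
  have pn: "fst (w!j) \<noteq> Suc n" "Suc (fst (w!j)) \<noteq> Suc n" using nb1 lt_n[of j] by auto
  have "((Suc (sh j), fst (w'!sh j)),(Suc (sh j), Suc (fst (w'!sh j)))) \<in> edges (Suc n) w' (rr r b)"
    using nb1 by (intro edges_nb1) (auto simp: len' sh_lt bs_sh)
  then show ?thesis using nb1 pn by (intro lift_edge) (auto simp: phi_low g_Suc_sh nth_sh)
qed

abbreviation "E' r b \<equiv> edges (Suc n) w' (rr r b)"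

lemma strand_edge: "j < Suc (length w) \<Longrightarrow> j \<noteq> q \<Longrightarrow> ((j,Suc n),(Suc j,Suc n)) \<in> E' r b"
proof -
  assume a: "j < Suc (length w)" "j \<noteq> q"
  then obtain j0 where j0: "j0 < length w" "j = sh j0" using idx_cases by blast
  show ?thesis using j0 lt_n[of j0] n1 by (intro edges_pass) (auto simp: len' sh_lt nth_sh)
qed

lemma strand_le: "j \<le> q \<Longrightarrow> ((j,Suc n),(q,Suc n)) \<in> RR (E' r b)"
  by (rule chain_RR) (use qL in \<open>auto intro!: strand_edge\<close>)

lemma strand_gt: "q < j \<Longrightarrow> j \<le> Suc (length w) \<Longrightarrow> ((j,Suc n),(q,Suc n)) \<in> RR (E' r b)"
proof -
  assume a: "q < j" "j \<le> Suc (length w)"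
  have "((j,Suc n),(Suc (length w),Suc n)) \<in> RR (E' r b)"
    by (rule chain_RR) (use a in \<open>auto intro!: strand_edge\<close>)
  moreover have "((Suc (length w),Suc n),(0,Suc n)) \<in> RR (E' r b)"
    by (rule RR_edge, subst len'[symmetric], rule edges_cl) auto
  moreover have "((0,Suc n),(q,Suc n)) \<in> RR (E' r b)" by (rule strand_le) simp
  ultimately show ?thesis using RR_trans by metis
qed

lemma strand_all: "j \<le> Suc (length w) \<Longrightarrow> ((j,Suc n),(q,Suc n)) \<in> RR (E' r b)"
  using strand_le strand_gt by (cases "j \<le> q") auto

definition can :: "bool \<Rightarrow> seg \<Rightarrow> seg" where
  "can b s = (if snd s = Suc n then (q, if b then n else Suc n) else if fst s = Suc q then (q, snd s) else s)"

lemma qq_nb0: "b \<Longrightarrow> ((q,n),(q,Suc n)) \<in> E' r b"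
  using edges_nb0[of q w' "rr r b" "Suc n"] by (simp add: len' qL less_Suc_eq_le bs_q nth_q)
lemma qq_nb1: "b \<Longrightarrow> ((Suc q,n),(Suc q,Suc n)) \<in> E' r b"
  using edges_nb1[of q w' "rr r b" "Suc n"] by (simp add: len' qL less_Suc_eq_le bs_q nth_q)
lemma qq_bl: "\<not> b \<Longrightarrow> p = n \<or> p = Suc n \<Longrightarrow> ((q,p),(Suc q,p)) \<in> E' r b"
  using edges_bl[of q w' "rr r b" p "Suc n"] by (simp add: len' qL less_Suc_eq_le bs_q nth_q)
lemma qq_pass: "1 \<le> p \<Longrightarrow> p < n \<Longrightarrow> ((q,p),(Suc q,p)) \<in> E' r b"
  using edges_pass[of q w' p "Suc n" "rr r b"] by (simp add: len' qL less_Suc_eq_le nth_q)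

lemma qn_fiber: "((Suc q, p),(q,p)) \<in> RR (E' r b)" if "1 \<le> p" "p \<le> n"
proof (cases "p < n")
  case True then show ?thesis using qq_pass[OF that(1) True] RR_edge' by metis
next
  case False then have p: "p = n" using that by auto
  show ?thesis
  proof (cases b)
    case False then show ?thesis using qq_bl[of b n] p RR_edge' by metis
  next
    case True
    have "((Suc q,n),(Suc q,Suc n)) \<in> RR (E' r b)" using qq_nb1[OF True] RR_edge by metis
    moreover have "((Suc q,Suc n),(q,Suc n)) \<in> RR (E' r b)" using strand_all[of "Suc q"] qL by auto
    moreover have "((q,Suc n),(q,n)) \<in> RR (E' r b)" using qq_nb0[OF True] RR_edge' by metis
    ultimately show ?thesis using p RR_trans by metis
  qed
qed

lemma to_can: "a \<in> D' \<Longrightarrow> (a, can b a) \<in> RR (E' r b)"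
proof -
  assume "a \<in> D'"
  then obtain j p where a: "a = (j,p)" "j \<le> Suc (length w)" "1 \<le> p" "p \<le> Suc n"
    by (auto simp: D'_def segs_def len')
  show ?thesis
  proof (cases "p = Suc n")
    case True
    have "((j,Suc n),(q,Suc n)) \<in> RR (E' r b)" using strand_all a by auto
    moreover have "((q,Suc n),(q,n)) \<in> RR (E' r b)" if b using qq_nb0[OF that] RR_edge' by metis
    ultimately show ?thesis using a True RR_trans by (cases b) (auto simp: can_def)
  next
    case False
    then show ?thesis using a qn_fiber[of p] by (auto simp: can_def)
  qed
qed

lemma can_eq: assumes "a \<in> D'" "c \<in> D'" "phi b a = phi b c" shows "can b a = can b c"
proof -
  obtain j p where a: "a = (j,p)" "j \<le> Suc (length w)" "1 \<le> p" "p \<le> Suc n"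
    using assms(1) by (auto simp: D'_def segs_def len')
  obtain j' p' where c: "c = (j',p')" "j' \<le> Suc (length w)" "1 \<le> p'" "p' \<le> Suc n"
    using assms(2) by (auto simp: D'_def segs_def len')
  have gg: "g x = g y \<Longrightarrow> (if x = Suc q then q else x) = (if y = Suc q then q else y)" for x y
    by (auto simp: g_def split: if_splits)
  have gq: "g x = q \<Longrightarrow> x = q \<or> x = Suc q" for x by (auto simp: g_def split: if_splits)
  show ?thesis
    using assms(3) a c gg[of j j'] gq[of j] gq[of j']
    by (auto simp: phi_def can_def split: if_splits)
qed

lemma cond_iii: "a \<in> D' \<Longrightarrow> c \<in> D' \<Longrightarrow> phi b a = phi b c \<Longrightarrow> (a,c) \<in> RR (E' r b)"
  using to_can[of a b r] to_can[of c b r] can_eq[of a c b] RR_trans RR_sym by metis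

lemma phi_img: "phi b ` D' = segs n w \<union> (if b then {} else {(0,Suc n)})"
proof
  show "phi b ` D' \<subseteq> segs n w \<union> (if b then {} else {(0,Suc n)})"
    using qL n1 by (auto simp: D'_def segs_def len' phi_def g_def split: if_splits)
next
  show "segs n w \<union> (if b then {} else {(0,Suc n)}) \<subseteq> phi b ` D'"
  proof
    fix u assume u: "u \<in> segs n w \<union> (if b then {} else {(0,Suc n)})"
    show "u \<in> phi b ` D'"
    proof (cases "u = (0, Suc n) \<and> \<not> b")
      case True
      then show ?thesis by (intro image_eqI[of _ _ "(0,Suc n)"]) (auto simp: phi_def D'_def segs_def)
    next
      case False
      then obtain j p where jp: "u = (j,p)" "j \<le> length w" "1 \<le> p" "p \<le> n"
        using u by (auto simp: segs_def split: if_splits)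
      show ?thesis
        by (intro image_eqI[of _ _ "(if j \<le> q then j else Suc j, p)"])
           (use jp in \<open>auto simp: phi_def D'_def segs_def len' g_def\<close>)
    qed
  qed
qed

lemma circles_w': "circles (Suc n) w' (rr r b) = pre b ` (circles n w r \<union> (if b then {} else {{(0,Suc n)}}))"
proof -
  have "circles (Suc n) w' (rr r b) = pre b ` {ccomp (edges n w r) u | u. u \<in> phi b ` D'}"
    unfolding comp_circles_eq pre_def D'_def[symmetric]
    by (rule hom_circles[OF E'_D cond_i cond_ii cond_iii])
  also have "{ccomp (edges n w r) u | u. u \<in> phi b ` D'} = circles n w r \<union> (if b then {} else {{(0,Suc n)}})"
  proof -
    have iso: "ccomp (edges n w r) (0, Suc n) = {(0,Suc n)}"
      using edges_segs[OF lok, of r] by (intro comp_isolated) (auto simp: segs_def)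
    show ?thesis unfolding phi_img comp_circles_eq using iso by auto
  qed
  finally show ?thesis .
qed

end


definition khc :: "seg set set \<Rightarrow> seg set set \<Rightarrow> seg set set \<Rightarrow> seg set set \<Rightarrow> bool" where
  "khc Cr Cr' P Q =
    (let A = Cr - Cr'; B = Cr' - Cr in
     (\<forall>C \<in> Cr \<inter> Cr'. C \<in> P \<longleftrightarrow> C \<in> Q) \<and>
     ((\<exists>a1 a2 b. a1 \<noteq> a2 \<and> A = {a1, a2} \<and> B = {b} \<and>
         ((a1 \<in> P \<and> a2 \<in> P \<and> b \<in> Q) \<or> ((a1 \<in> P) \<noteq> (a2 \<in> P) \<and> b \<notin> Q)))
      \<or>
      (\<exists>a b1 b2. b1 \<noteq> b2 \<and> A = {a} \<and> B = {b1, b2} \<and>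
         ((a \<in> P \<and> (b1 \<in> Q) \<noteq> (b2 \<in> Q)) \<or> (a \<notin> P \<and> b1 \<notin> Q \<and> b2 \<notin> Q)))))"

lemma kh_coeff_khc: "kh_coeff n w x y = khc (circles n w (fst x)) (circles n w (fst y)) (snd x) (snd y)"
  unfolding kh_coeff_def khc_def Let_def ..

lemma img_pair_iff:
  assumes inj: "inj_on h U" and X: "X \<subseteq> U"
  shows "(\<exists>a1 a2. a1 \<noteq> a2 \<and> h ` X = {a1,a2} \<and> F a1 a2) \<longleftrightarrow>
         (\<exists>x1 x2. x1 \<noteq> x2 \<and> X = {x1,x2} \<and> F (h x1) (h x2))"
proof
  assume "\<exists>a1 a2. a1 \<noteq> a2 \<and> h ` X = {a1,a2} \<and> F a1 a2"
  then obtain a1 a2 where a: "a1 \<noteq> a2" "h ` X = {a1,a2}" "F a1 a2" by blast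
  obtain x1 where x1: "x1 \<in> X" "h x1 = a1" using a(2) by (metis imageE insertI1)
  obtain x2 where x2: "x2 \<in> X" "h x2 = a2" using a(2) by (metis imageE insertI1 insert_commute)
  have "h ` X = h ` {x1,x2}" using a(2) x1 x2 by simp
  moreover have "{x1,x2} \<subseteq> U" using X x1 x2 by auto
  ultimately have "X = {x1,x2}" using inj_on_image_eq_iff[OF inj X] by blast
  moreover have "x1 \<noteq> x2" using x1 x2 a by auto
  ultimately show "\<exists>x1 x2. x1 \<noteq> x2 \<and> X = {x1,x2} \<and> F (h x1) (h x2)" using x1 x2 a by auto
next
  assume "\<exists>x1 x2. x1 \<noteq> x2 \<and> X = {x1,x2} \<and> F (h x1) (h x2)"
  then obtain x1 x2 where x: "x1 \<noteq> x2" "X = {x1,x2}" "F (h x1) (h x2)" by blast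
  then have "h x1 \<noteq> h x2" using inj X by (auto dest: inj_onD)
  then show "\<exists>a1 a2. a1 \<noteq> a2 \<and> h ` X = {a1,a2} \<and> F a1 a2" using x by auto
qed

lemma img_single_iff:
  assumes inj: "inj_on h U" and X: "X \<subseteq> U"
  shows "(\<exists>a. h ` X = {a} \<and> F a) \<longleftrightarrow> (\<exists>x. X = {x} \<and> F (h x))"
proof
  assume "\<exists>a. h ` X = {a} \<and> F a"
  then obtain a where a: "h ` X = {a}" "F a" by blast
  obtain x where x: "x \<in> X" "h x = a" using a(1) by (metis imageE insertI1)
  have "h ` X = h ` {x}" using a(1) x by simp
  moreover have "{x} \<subseteq> U" using X x by auto
  ultimately have "X = {x}" using inj_on_image_eq_iff[OF inj X] by blast
  then show "\<exists>x. X = {x} \<and> F (h x)" using x a by blast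
qed auto

lemma khc_inj1:
  assumes inj: "inj_on h U" and U: "Cr \<subseteq> U" "Cr' \<subseteq> U" "P \<subseteq> U" "Q \<subseteq> U"
    and k: "khc Cr Cr' P Q"
  shows "khc (h ` Cr) (h ` Cr') (h ` P) (h ` Q)"
proof -
  have d1: "h ` Cr - h ` Cr' = h ` (Cr - Cr')" by (rule inj_on_image_set_diff[OF inj, symmetric]) (use U in blast)+
  have d2: "h ` Cr' - h ` Cr = h ` (Cr' - Cr)" by (rule inj_on_image_set_diff[OF inj, symmetric]) (use U in blast)+
  have i: "h ` Cr \<inter> h ` Cr' = h ` (Cr \<inter> Cr')" by (rule inj_on_image_Int[OF inj, symmetric]) (use U in blast)+
  have memP: "x \<in> U \<Longrightarrow> h x \<in> h ` P \<longleftrightarrow> x \<in> P" for x using inj U(3) by (simp add: inj_on_image_mem_iff)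
  have memQ: "x \<in> U \<Longrightarrow> h x \<in> h ` Q \<longleftrightarrow> x \<in> Q" for x using inj U(4) by (simp add: inj_on_image_mem_iff)
  have hne: "x \<in> U \<Longrightarrow> y \<in> U \<Longrightarrow> x \<noteq> y \<Longrightarrow> h x \<noteq> h y" for x y using inj by (auto dest: inj_onD)
  from k have c1: "\<forall>C \<in> Cr \<inter> Cr'. C \<in> P \<longleftrightarrow> C \<in> Q" unfolding khc_def Let_def by (elim conjE)
  have c1': "\<forall>C \<in> h ` (Cr \<inter> Cr'). C \<in> h ` P \<longleftrightarrow> C \<in> h ` Q"
  proof
    fix C assume "C \<in> h ` (Cr \<inter> Cr')"
    then obtain c where "c \<in> Cr \<inter> Cr'" "C = h c" by blast
    moreover then have "c \<in> U" using U by auto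
    ultimately show "C \<in> h ` P \<longleftrightarrow> C \<in> h ` Q" using c1 memP[of c] memQ[of c] by simp
  qed
  from k have k2: "(\<exists>a1 a2 b. a1 \<noteq> a2 \<and> Cr - Cr' = {a1, a2} \<and> Cr' - Cr = {b} \<and>
         ((a1 \<in> P \<and> a2 \<in> P \<and> b \<in> Q) \<or> ((a1 \<in> P) \<noteq> (a2 \<in> P) \<and> b \<notin> Q)))
    \<or> (\<exists>a b1 b2. b1 \<noteq> b2 \<and> Cr - Cr' = {a} \<and> Cr' - Cr = {b1, b2} \<and>
         ((a \<in> P \<and> (b1 \<in> Q) \<noteq> (b2 \<in> Q)) \<or> (a \<notin> P \<and> b1 \<notin> Q \<and> b2 \<notin> Q)))"
    unfolding khc_def Let_def by (elim conjE)
  consider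
      (m) a1 a2 b where "a1 \<noteq> a2" "Cr - Cr' = {a1, a2}" "Cr' - Cr = {b}"
         "(a1 \<in> P \<and> a2 \<in> P \<and> b \<in> Q) \<or> ((a1 \<in> P) \<noteq> (a2 \<in> P) \<and> b \<notin> Q)"
    | (s) a b1 b2 where "b1 \<noteq> b2" "Cr - Cr' = {a}" "Cr' - Cr = {b1, b2}"
         "(a \<in> P \<and> (b1 \<in> Q) \<noteq> (b2 \<in> Q)) \<or> (a \<notin> P \<and> b1 \<notin> Q \<and> b2 \<notin> Q)"
  proof -
    from k2 show thesis
    proof
      assume "\<exists>a1 a2 b. a1 \<noteq> a2 \<and> Cr - Cr' = {a1, a2} \<and> Cr' - Cr = {b} \<and>
         ((a1 \<in> P \<and> a2 \<in> P \<and> b \<in> Q) \<or> ((a1 \<in> P) \<noteq> (a2 \<in> P) \<and> b \<notin> Q))"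
      then show thesis by (elim exE conjE) (rule that(1), assumption+)
    next
      assume "\<exists>a b1 b2. b1 \<noteq> b2 \<and> Cr - Cr' = {a} \<and> Cr' - Cr = {b1, b2} \<and>
         ((a \<in> P \<and> (b1 \<in> Q) \<noteq> (b2 \<in> Q)) \<or> (a \<notin> P \<and> b1 \<notin> Q \<and> b2 \<notin> Q))"
      then show thesis by (elim exE conjE) (rule that(2), assumption+)
    qed
  qed
  then show ?thesis
  proof cases
    case m
    have "a1 \<in> Cr - Cr'" "a2 \<in> Cr - Cr'" "b \<in> Cr' - Cr" using m(2,3) by simp_all
    then have inU: "a1 \<in> U" "a2 \<in> U" "b \<in> U" using U by blast+
    have "h a1 \<noteq> h a2" using hne[OF inU(1,2) m(1)] .
    moreover have "h ` (Cr - Cr') = {h a1, h a2}" "h ` (Cr' - Cr) = {h b}" using m(2,3) by simp_all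
    moreover have "(h a1 \<in> h ` P \<and> h a2 \<in> h ` P \<and> h b \<in> h ` Q) \<or> ((h a1 \<in> h ` P) \<noteq> (h a2 \<in> h ` P) \<and> h b \<notin> h ` Q)"
      using m(4) memP memQ inU by simp
    ultimately have M: "\<exists>a1 a2 b. a1 \<noteq> a2 \<and> h ` (Cr - Cr') = {a1, a2} \<and> h ` (Cr' - Cr) = {b} \<and>
         ((a1 \<in> h ` P \<and> a2 \<in> h ` P \<and> b \<in> h ` Q) \<or> ((a1 \<in> h ` P) \<noteq> (a2 \<in> h ` P) \<and> b \<notin> h ` Q))"
      by (intro exI[of _ "h a1"] exI[of _ "h a2"] exI[of _ "h b"] conjI)
    show ?thesis unfolding khc_def Let_def d1 d2 i by (intro conjI c1' disjI1 M)
  next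
    case s
    have "a \<in> Cr - Cr'" "b1 \<in> Cr' - Cr" "b2 \<in> Cr' - Cr" using s(2,3) by simp_all
    then have inU: "a \<in> U" "b1 \<in> U" "b2 \<in> U" using U by blast+
    have "h b1 \<noteq> h b2" using hne[OF inU(2,3) s(1)] .
    moreover have "h ` (Cr - Cr') = {h a}" "h ` (Cr' - Cr) = {h b1, h b2}" using s(2,3) by simp_all
    moreover have "(h a \<in> h ` P \<and> (h b1 \<in> h ` Q) \<noteq> (h b2 \<in> h ` Q)) \<or> (h a \<notin> h ` P \<and> h b1 \<notin> h ` Q \<and> h b2 \<notin> h ` Q)"
      using s(4) memP memQ inU by simp
    ultimately have S: "\<exists>a b1 b2. b1 \<noteq> b2 \<and> h ` (Cr - Cr') = {a} \<and> h ` (Cr' - Cr) = {b1, b2} \<and>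
         ((a \<in> h ` P \<and> (b1 \<in> h ` Q) \<noteq> (b2 \<in> h ` Q)) \<or> (a \<notin> h ` P \<and> b1 \<notin> h ` Q \<and> b2 \<notin> h ` Q))"
      by (intro exI[of _ "h a"] exI[of _ "h b1"] exI[of _ "h b2"] conjI)
    show ?thesis unfolding khc_def Let_def d1 d2 i by (intro conjI c1' disjI2 S)
  qed
qed

lemma khc_inj:
  assumes inj: "inj_on h U" and U: "Cr \<subseteq> U" "Cr' \<subseteq> U" "P \<subseteq> U" "Q \<subseteq> U"
  shows "khc (h ` Cr) (h ` Cr') (h ` P) (h ` Q) = khc Cr Cr' P Q"
proof
  assume k: "khc (h ` Cr) (h ` Cr') (h ` P) (h ` Q)"
  define hi where "hi = inv_into U h"
  have inj': "inj_on hi (h ` U)" unfolding hi_def by (rule inj_on_inv_into) simp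
  have bk: "X \<subseteq> U \<Longrightarrow> hi ` h ` X = X" for X using inj by (simp add: image_inv_into_cancel hi_def)
  have "khc (hi ` h ` Cr) (hi ` h ` Cr') (hi ` h ` P) (hi ` h ` Q)"
    by (rule khc_inj1[OF inj' _ _ _ _ k]) (use U in auto)
  then show "khc Cr Cr' P Q" using bk U by simp
qed (rule khc_inj1[OF assms])


definition khc' :: "seg set set \<Rightarrow> seg set set \<Rightarrow> seg set set \<Rightarrow> seg set set \<Rightarrow> seg set set \<Rightarrow> bool" where
  "khc' I A B P Q =
    ((\<forall>C \<in> I. C \<in> P \<longleftrightarrow> C \<in> Q) \<and>
     ((\<exists>a1 a2 b. a1 \<noteq> a2 \<and> A = {a1, a2} \<and> B = {b} \<and>
         ((a1 \<in> P \<and> a2 \<in> P \<and> b \<in> Q) \<or> ((a1 \<in> P) \<noteq> (a2 \<in> P) \<and> b \<notin> Q)))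
      \<or>
      (\<exists>a b1 b2. b1 \<noteq> b2 \<and> A = {a} \<and> B = {b1, b2} \<and>
         ((a \<in> P \<and> (b1 \<in> Q) \<noteq> (b2 \<in> Q)) \<or> (a \<notin> P \<and> b1 \<notin> Q \<and> b2 \<notin> Q)))))"

lemma khc_khc': "khc Cr Cr' P Q = khc' (Cr \<inter> Cr') (Cr - Cr') (Cr' - Cr) P Q"
  unfolding khc_def khc'_def Let_def ..

lemma khc'_cong1:
  assumes eq: "\<forall>x\<in>I \<union> A \<union> B. (x \<in> P \<longleftrightarrow> x \<in> P2) \<and> (x \<in> Q \<longleftrightarrow> x \<in> Q2)"
    and k: "khc' I A B P Q"
  shows "khc' I A B P2 Q2"
proof -
  from k have c1: "\<forall>C \<in> I. C \<in> P \<longleftrightarrow> C \<in> Q" unfolding khc'_def by (elim conjE)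
  then have c1': "\<forall>C \<in> I. C \<in> P2 \<longleftrightarrow> C \<in> Q2" using eq by blast
  from k have k2: "(\<exists>a1 a2 b. a1 \<noteq> a2 \<and> A = {a1, a2} \<and> B = {b} \<and>
         ((a1 \<in> P \<and> a2 \<in> P \<and> b \<in> Q) \<or> ((a1 \<in> P) \<noteq> (a2 \<in> P) \<and> b \<notin> Q)))
    \<or> (\<exists>a b1 b2. b1 \<noteq> b2 \<and> A = {a} \<and> B = {b1, b2} \<and>
         ((a \<in> P \<and> (b1 \<in> Q) \<noteq> (b2 \<in> Q)) \<or> (a \<notin> P \<and> b1 \<notin> Q \<and> b2 \<notin> Q)))"
    unfolding khc'_def by (elim conjE)
  then show ?thesis
  proof
    assume "\<exists>a1 a2 b. a1 \<noteq> a2 \<and> A = {a1, a2} \<and> B = {b} \<and>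
         ((a1 \<in> P \<and> a2 \<in> P \<and> b \<in> Q) \<or> ((a1 \<in> P) \<noteq> (a2 \<in> P) \<and> b \<notin> Q))"
    then obtain a1 a2 b where m: "a1 \<noteq> a2" "A = {a1, a2}" "B = {b}"
         "(a1 \<in> P \<and> a2 \<in> P \<and> b \<in> Q) \<or> ((a1 \<in> P) \<noteq> (a2 \<in> P) \<and> b \<notin> Q)"
      by (elim exE conjE) (rule that, assumption+)
    have "a1 \<in> A" "a2 \<in> A" "b \<in> B" using m(2,3) by simp_all
    then have "(a1 \<in> P2 \<and> a2 \<in> P2 \<and> b \<in> Q2) \<or> ((a1 \<in> P2) \<noteq> (a2 \<in> P2) \<and> b \<notin> Q2)"
      using m(4) eq by blast
    then have "\<exists>a1 a2 b. a1 \<noteq> a2 \<and> A = {a1, a2} \<and> B = {b} \<and>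
         ((a1 \<in> P2 \<and> a2 \<in> P2 \<and> b \<in> Q2) \<or> ((a1 \<in> P2) \<noteq> (a2 \<in> P2) \<and> b \<notin> Q2))"
      using m(1-3) by (intro exI[of _ a1] exI[of _ a2] exI[of _ b] conjI)
    then show ?thesis unfolding khc'_def by (intro conjI c1' disjI1)
  next
    assume "\<exists>a b1 b2. b1 \<noteq> b2 \<and> A = {a} \<and> B = {b1, b2} \<and>
         ((a \<in> P \<and> (b1 \<in> Q) \<noteq> (b2 \<in> Q)) \<or> (a \<notin> P \<and> b1 \<notin> Q \<and> b2 \<notin> Q))"
    then obtain a b1 b2 where m: "b1 \<noteq> b2" "A = {a}" "B = {b1, b2}"
         "(a \<in> P \<and> (b1 \<in> Q) \<noteq> (b2 \<in> Q)) \<or> (a \<notin> P \<and> b1 \<notin> Q \<and> b2 \<notin> Q)"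
      by (elim exE conjE) (rule that, assumption+)
    have "a \<in> A" "b1 \<in> B" "b2 \<in> B" using m(2,3) by simp_all
    then have "(a \<in> P2 \<and> (b1 \<in> Q2) \<noteq> (b2 \<in> Q2)) \<or> (a \<notin> P2 \<and> b1 \<notin> Q2 \<and> b2 \<notin> Q2)"
      using m(4) eq by blast
    then have "\<exists>a b1 b2. b1 \<noteq> b2 \<and> A = {a} \<and> B = {b1, b2} \<and>
         ((a \<in> P2 \<and> (b1 \<in> Q2) \<noteq> (b2 \<in> Q2)) \<or> (a \<notin> P2 \<and> b1 \<notin> Q2 \<and> b2 \<notin> Q2))"
      using m(1-3) by (intro exI[of _ a] exI[of _ b1] exI[of _ b2] conjI)
    then show ?thesis unfolding khc'_def by (intro conjI c1' disjI2)
  qed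
qed

lemma khc'_cong:
  assumes eq: "\<forall>x\<in>I \<union> A \<union> B. (x \<in> P \<longleftrightarrow> x \<in> P2) \<and> (x \<in> Q \<longleftrightarrow> x \<in> Q2)"
  shows "khc' I A B P Q = khc' I A B P2 Q2"
proof
  show "khc' I A B P Q \<Longrightarrow> khc' I A B P2 Q2" by (rule khc'_cong1[OF eq])
  have eq2: "\<forall>x\<in>I \<union> A \<union> B. (x \<in> P2 \<longleftrightarrow> x \<in> P) \<and> (x \<in> Q2 \<longleftrightarrow> x \<in> Q)" using eq by blast
  show "khc' I A B P2 Q2 \<Longrightarrow> khc' I A B P Q" by (rule khc'_cong1[OF eq2])
qed

lemma khc'_insertI: "khc' (insert X I) A B P Q = ((X \<in> P \<longleftrightarrow> X \<in> Q) \<and> khc' I A B P Q)"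
  unfolding khc'_def by auto

lemma khc_insert:
  assumes "X \<notin> Cr" "X \<notin> Cr'"
  shows "khc (insert X Cr) (insert X Cr') P Q = ((X \<in> P \<longleftrightarrow> X \<in> Q) \<and> khc Cr Cr' (P - {X}) (Q - {X}))"
proof -
  have 1: "insert X Cr \<inter> insert X Cr' = insert X (Cr \<inter> Cr')" by auto
  have 2: "insert X Cr - insert X Cr' = Cr - Cr'" "insert X Cr' - insert X Cr = Cr' - Cr" using assms by auto
  have 3: "khc' (Cr \<inter> Cr') (Cr - Cr') (Cr' - Cr) P Q = khc' (Cr \<inter> Cr') (Cr - Cr') (Cr' - Cr) (P - {X}) (Q - {X})"
    by (rule khc'_cong) (use assms in auto)
  show ?thesis unfolding khc_khc' 1 2 khc'_insertI 3 ..
qed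

lemma khc'_merge:
  assumes "a \<noteq> a'"
  shows "khc' I {a, a'} {m} P Q = ((\<forall>C \<in> I. C \<in> P \<longleftrightarrow> C \<in> Q) \<and>
     ((a \<in> P \<and> a' \<in> P \<and> m \<in> Q) \<or> ((a \<in> P) \<noteq> (a' \<in> P) \<and> m \<notin> Q)))"
proof -
  have s: "\<not> (\<exists>x b1 b2. b1 \<noteq> b2 \<and> {a, a'} = {x} \<and> F x b1 b2)" for F
    using assms by (metis insertI1 insert_commute singletonD)
  have m: "(\<exists>a1 a2 b. a1 \<noteq> a2 \<and> {a, a'} = {a1, a2} \<and> {m} = {b} \<and>
         ((a1 \<in> P \<and> a2 \<in> P \<and> b \<in> Q) \<or> ((a1 \<in> P) \<noteq> (a2 \<in> P) \<and> b \<notin> Q)))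
     = ((a \<in> P \<and> a' \<in> P \<and> m \<in> Q) \<or> ((a \<in> P) \<noteq> (a' \<in> P) \<and> m \<notin> Q))"
  proof
    assume "\<exists>a1 a2 b. a1 \<noteq> a2 \<and> {a, a'} = {a1, a2} \<and> {m} = {b} \<and>
         ((a1 \<in> P \<and> a2 \<in> P \<and> b \<in> Q) \<or> ((a1 \<in> P) \<noteq> (a2 \<in> P) \<and> b \<notin> Q))"
    then obtain a1 a2 b where "{a, a'} = {a1, a2}" "{m} = {b}"
         "(a1 \<in> P \<and> a2 \<in> P \<and> b \<in> Q) \<or> ((a1 \<in> P) \<noteq> (a2 \<in> P) \<and> b \<notin> Q)"
      by (elim exE conjE) (rule that, assumption+)
    then show "(a \<in> P \<and> a' \<in> P \<and> m \<in> Q) \<or> ((a \<in> P) \<noteq> (a' \<in> P) \<and> m \<notin> Q)"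
      unfolding doubleton_eq_iff by auto
  next
    assume "(a \<in> P \<and> a' \<in> P \<and> m \<in> Q) \<or> ((a \<in> P) \<noteq> (a' \<in> P) \<and> m \<notin> Q)"
    then show "\<exists>a1 a2 b. a1 \<noteq> a2 \<and> {a, a'} = {a1, a2} \<and> {m} = {b} \<and>
         ((a1 \<in> P \<and> a2 \<in> P \<and> b \<in> Q) \<or> ((a1 \<in> P) \<noteq> (a2 \<in> P) \<and> b \<notin> Q))"
      using assms by (intro exI[of _ a] exI[of _ a'] exI[of _ m]) simp
  qed
  show ?thesis unfolding khc'_def m using s by blast
qed

definition kg :: "seg set set \<Rightarrow> seg set set \<Rightarrow> int" where
  "kg Cr P = int (card {C \<in> P. nontrivial C}) - int (card {C \<in> Cr - P. nontrivial C})"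

lemma kgr_kg: "kgr n w x = kg (circles n w (fst x)) (snd x)"
  unfolding kgr_def kg_def ..

lemma kg_inj:
  assumes inj: "inj_on h U" and U: "Cr \<subseteq> U" "P \<subseteq> Cr" and nt: "\<And>C. C \<in> U \<Longrightarrow> nontrivial (h C) = nontrivial C"
  shows "kg (h ` Cr) (h ` P) = kg Cr P"
proof -
  have "{C \<in> h ` P. nontrivial C} = h ` {C \<in> P. nontrivial C}" using nt U by auto
  moreover have "card (h ` {C \<in> P. nontrivial C}) = card {C \<in> P. nontrivial C}"
    by (rule card_image, rule inj_on_subset[OF inj]) (use U in auto)
  moreover have "h ` Cr - h ` P = h ` (Cr - P)"
    by (rule inj_on_image_set_diff[OF inj, symmetric]) (use U in blast)+
  moreover have "{C \<in> h ` (Cr - P). nontrivial C} = h ` {C \<in> Cr - P. nontrivial C}" using nt U by auto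
  moreover have "card (h ` {C \<in> Cr - P. nontrivial C}) = card {C \<in> Cr - P. nontrivial C}"
    by (rule card_image, rule inj_on_subset[OF inj]) (use U in auto)
  ultimately show ?thesis unfolding kg_def by simp
qed

lemma kg_insert:
  assumes "finite Cr" "X \<notin> Cr" "nontrivial X" "P \<subseteq> insert X Cr"
  shows "kg (insert X Cr) P = kg Cr (P - {X}) + (if X \<in> P then 1 else -1)"
proof (cases "X \<in> P")
  case True
  have "{C \<in> P. nontrivial C} = insert X {C \<in> P - {X}. nontrivial C}" using True assms by auto
  moreover have "finite {C \<in> P - {X}. nontrivial C}" using assms(1,4) by (auto intro: finite_subset)
  moreover have "insert X Cr - P = Cr - (P - {X})" using True assms by auto
  ultimately show ?thesis unfolding kg_def using True by simp
next
  case False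
  have "{C \<in> insert X Cr - P. nontrivial C} = insert X {C \<in> Cr - (P - {X}). nontrivial C}" using False assms by auto
  moreover have "finite {C \<in> Cr - (P - {X}). nontrivial C}" using assms(1) by auto
  moreover have "P - {X} = P" using False by auto
  ultimately show ?thesis unfolding kg_def using False assms(2) by simp
qed

lemma kg_remove:
  assumes "finite Cr" "C0 \<in> P" "P \<subseteq> Cr"
  shows "kg Cr (P - {C0}) = kg Cr P - (if nontrivial C0 then 2 else 0)"
proof (cases "nontrivial C0")
  case True
  have "{C \<in> P. nontrivial C} = insert C0 {C \<in> P - {C0}. nontrivial C}" using True assms by auto
  moreover have "finite {C \<in> P - {C0}. nontrivial C}" using assms by (auto intro: finite_subset)
  moreover have "{C \<in> Cr - (P - {C0}). nontrivial C} = insert C0 {C \<in> Cr - P. nontrivial C}" using True assms by auto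
  moreover have "finite {C \<in> Cr - P. nontrivial C}" using assms by auto
  moreover have "C0 \<notin> {C \<in> Cr - P. nontrivial C}" "C0 \<notin> {C \<in> P - {C0}. nontrivial C}" using assms by auto
  ultimately show ?thesis unfolding kg_def using True by (simp only: card_insert_disjoint) simp
next
  case False
  have "{C \<in> P - {C0}. nontrivial C} = {C \<in> P. nontrivial C}" using False by auto
  moreover have "{C \<in> Cr - (P - {C0}). nontrivial C} = {C \<in> Cr - P. nontrivial C}" using False by auto
  ultimately show ?thesis unfolding kg_def using False by simp
qed


lemma circle_sub: "letters_ok n w \<Longrightarrow> C \<in> circles n w r \<Longrightarrow> C \<subseteq> segs n w"
  unfolding comp_circles_eq ccomp_def using RR_dom[OF edges_segs] by blast

lemma segs_finite: "finite (segs n w)" by (simp add: segs_def)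

lemma circles_finite: "finite (circles n w r)"
proof -
  have "circles n w r = (\<lambda>x. ccomp (edges n w r) x) ` segs n w" unfolding comp_circles_eq by auto
  then show ?thesis using segs_finite by simp
qed

lemma ccomp_self: "x \<in> ccomp E x" by (simp add: ccomp_def)

lemma ccomp_eq: assumes "y \<in> ccomp E x" shows "ccomp E y = ccomp E x"
proof -
  have xy: "(x,y) \<in> RR E" using assms by (simp add: ccomp_def)
  then have yx: "(y,x) \<in> RR E" by (rule RR_sym)
  show ?thesis unfolding ccomp_def using RR_trans[OF xy] RR_trans[OF yx] by blast
qed

lemma circle_eq: "C \<in> circles n w r \<Longrightarrow> x \<in> C \<Longrightarrow> C = ccomp (edges n w r) x"
proof -
  assume "C \<in> circles n w r" "x \<in> C"
  then obtain y where "C = ccomp (edges n w r) y" unfolding comp_circles_eq by blast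
  then show ?thesis using ccomp_eq[of x "edges n w r" y] \<open>x \<in> C\<close> by simp
qed

lemma circles_disj: "C \<in> circles n w r \<Longrightarrow> C' \<in> circles n w r \<Longrightarrow> x \<in> C \<Longrightarrow> x \<in> C' \<Longrightarrow> C = C'"
proof -
  assume "C \<in> circles n w r" "C' \<in> circles n w r" "x \<in> C" "x \<in> C'"
  then show ?thesis using circle_eq[of C n w r x] circle_eq[of C' n w r x] by simp
qed

lemma ccomp_circle: "x \<in> segs n w \<Longrightarrow> ccomp (edges n w r) x \<in> circles n w r"
  unfolding comp_circles_eq by blast

context stab
begin

definition xpt :: seg where "xpt = (0, Suc n)"
definition mT :: "seg set \<Rightarrow> seg set" where "mT C = (if (q,n) \<in> C then insert xpt C else C)"
definition Cb :: "nat set \<Rightarrow> bool \<Rightarrow> seg set set" where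
  "Cb r b = (if b then mT ` circles n w r else insert {xpt} (circles n w r))"
definition Cp :: "nat set \<Rightarrow> seg set" where "Cp r = ccomp (edges n w r) (q,n)"
definition U0 :: "seg set set" where "U0 = {C. C \<subseteq> segs n w \<union> {xpt}}"

lemma xpt_nseg: "xpt \<notin> segs n w" by (simp add: xpt_def segs_def)
lemma qn_seg: "(q,n) \<in> segs n w" using qL n1 by (simp add: segs_def)
lemma xpt_ne_qn: "xpt \<noteq> (q,n)" by (simp add: xpt_def)

lemma csub: "C \<in> circles n w r \<Longrightarrow> C \<subseteq> segs n w" using circle_sub[OF lok] .

lemma Cp_in: "Cp r \<in> circles n w r" "(q,n) \<in> Cp r"
  unfolding Cp_def using ccomp_circle[OF qn_seg] ccomp_self by auto

lemma xpt_notin_circle: "C \<in> circles n w r \<Longrightarrow> xpt \<notin> C" using csub xpt_nseg by blast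

lemma sing_xpt_notin: "{xpt} \<notin> circles n w r" using xpt_notin_circle by blast

lemma mT_other: "C \<in> circles n w r \<Longrightarrow> C \<noteq> Cp r \<Longrightarrow> mT C = C"
  unfolding mT_def using circles_disj Cp_in by metis

lemma mT_Cp: "mT (Cp r) = insert xpt (Cp r)"
  unfolding mT_def using Cp_in by simp

lemma CbT: "Cb r True = insert (insert xpt (Cp r)) (circles n w r - {Cp r})"
proof -
  have "mT ` circles n w r = mT ` (insert (Cp r) (circles n w r - {Cp r}))" using Cp_in by (simp add: insert_absorb)
  also have "\<dots> = insert (insert xpt (Cp r)) (mT ` (circles n w r - {Cp r}))" by (simp only: image_insert mT_Cp)
  also have "mT ` (circles n w r - {Cp r}) = circles n w r - {Cp r}" using mT_other by force
  finally show ?thesis by (simp add: Cb_def)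
qed

lemma CbF: "Cb r False = insert {xpt} (circles n w r)" by (simp add: Cb_def)

lemma pre_T: "C \<subseteq> segs n w \<Longrightarrow> pre True C = pre False (mT C)"
  unfolding pre_def mT_def using xpt_nseg by (auto simp: phi_def xpt_def segs_def)

lemma circles'_F: "circles (Suc n) w' (rr r b) = pre False ` Cb r b"
proof (cases b)
  case True
  have "circles (Suc n) w' (rr r b) = pre True ` circles n w r" using circles_w'[of r b] True by simp
  also have "\<dots> = pre False ` mT ` circles n w r" using pre_T csub by (force simp: image_image)
  finally show ?thesis using True by (simp add: Cb_def)
next
  case False
  have "xpt = (0, Suc n)" by (rule xpt_def)
  then show ?thesis using circles_w'[of r b] False by (simp add: Cb_def)
qed

lemma U0_img: "C \<in> U0 \<Longrightarrow> phi False ` pre False C = C"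
proof -
  assume "C \<in> U0"
  then have "C \<subseteq> phi False ` D'" using phi_img[of False] by (simp add: U0_def xpt_def)
  then show ?thesis unfolding pre_def by blast
qed

lemma pre_inj: "inj_on (pre False) U0"
  by (rule inj_on_inverseI[where g="\<lambda>S. phi False ` S"]) (rule U0_img)

lemma Cb_U0: "Cb r b \<subseteq> U0"
  using csub by (auto simp: Cb_def U0_def mT_def)

lemma segs_D': "segs n w \<union> {xpt} \<subseteq> D'"
  by (auto simp: segs_def D'_def len' xpt_def)

lemma phi_F0: "phi False (0,p) = (0,p)" by (simp add: phi_def xpt_def)

lemma nt_pre: "C \<in> U0 \<Longrightarrow> nontrivial (pre False C) = nontrivial C"
proof -
  assume C: "C \<in> U0"
  have "{p. (0,p) \<in> pre False C} = {p. (0,p) \<in> C}"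
    using C segs_D' by (auto simp: pre_def phi_F0 U0_def)
  then show ?thesis by (simp add: nontrivial_def)
qed

lemma nt_xpt: "nontrivial {xpt}" by (simp add: nontrivial_def xpt_def)


lemma set3: "m \<noteq> x \<Longrightarrow> m \<notin> Cr \<Longrightarrow> x \<notin> Cr \<Longrightarrow> c \<in> Cr \<Longrightarrow>
  insert x Cr \<inter> insert m (Cr - {c}) = Cr - {c} \<and> insert x Cr - insert m (Cr - {c}) = {x, c} \<and>
  insert m (Cr - {c}) - insert x Cr = {m}" by blast

definition lift :: "nat set \<Rightarrow> bool \<Rightarrow> seg set set \<Rightarrow> kgen" where
  "lift r b P = (rr r b, pre False ` P)"

lemma q_in_rr: "q \<in> rr r b \<longleftrightarrow> b" by (auto simp: rr_def sh_ne_q')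
lemma sh_in_rr: "sh j \<in> rr r b \<longleftrightarrow> j \<in> r" by (auto simp: rr_def sh_inj sh_ne_q)

lemma rr_inj: "rr r b = rr r2 b2 \<Longrightarrow> r = r2 \<and> b = b2"
proof -
  assume e: "rr r b = rr r2 b2"
  have "b = b2" using q_in_rr[of r b] q_in_rr[of r2 b2] e by simp
  moreover have "r = r2"
  proof
    show "r \<subseteq> r2" using sh_in_rr e by blast
    show "r2 \<subseteq> r" using sh_in_rr e by blast
  qed
  ultimately show ?thesis by simp
qed

lemma rr_sub: "r \<subseteq> {..<length w} \<Longrightarrow> rr r b \<subseteq> {..<Suc (length w)}"
  using qL by (auto simp: rr_def sh_def)

lemma rr_surj: "r' \<subseteq> {..<Suc (length w)} \<Longrightarrow> r' = rr {j. j < length w \<and> sh j \<in> r'} (q \<in> r')"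
proof -
  assume r': "r' \<subseteq> {..<Suc (length w)}"
  show ?thesis
  proof (rule set_eqI)
    fix x show "x \<in> r' \<longleftrightarrow> x \<in> rr {j. j < length w \<and> sh j \<in> r'} (q \<in> r')"
    proof
      assume x: "x \<in> r'"
      then have "x < Suc (length w)" using r' by auto
      then consider "x = q" | j where "j < length w" "x = sh j" using idx_cases by blast
      then show "x \<in> rr {j. j < length w \<and> sh j \<in> r'} (q \<in> r')"
        by cases (use x in \<open>auto simp: rr_def\<close>)
    next
      assume "x \<in> rr {j. j < length w \<and> sh j \<in> r'} (q \<in> r')"
      then show "x \<in> r'" by (auto simp: rr_def split: if_splits)
    qed
  qed
qed

lemma rr_insert_sh: "insert (sh c) (rr r b) = rr (insert c r) b" by (auto simp: rr_def)
lemma rr_insert_q: "insert q (rr r False) = rr r True" by (auto simp: rr_def)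

lemma lift_gens: "r \<subseteq> {..<length w} \<Longrightarrow> P \<subseteq> Cb r b \<Longrightarrow> lift r b P \<in> gens (Suc n) w'"
  unfolding gens_def lift_def using rr_sub[of r b] circles'_F[of r b] by (auto simp: len')

lemma gens'_lift:
  assumes "x' \<in> gens (Suc n) w'"
  obtains r b P where "r \<subseteq> {..<length w}" "P \<subseteq> Cb r b" "x' = lift r b P"
proof -
  obtain r' P' where x': "x' = (r', P')" "r' \<subseteq> {..<Suc (length w)}" "P' \<subseteq> circles (Suc n) w' r'"
    using assms by (auto simp: gens_def len')
  define r where "r = {j. j < length w \<and> sh j \<in> r'}"
  define b where "b = (q \<in> r')"
  have rr: "r' = rr r b" unfolding r_def b_def by (rule rr_surj[OF x'(2)])
  then have "P' \<subseteq> pre False ` Cb r b" using x'(3) circles'_F by simp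
  then obtain P where P: "P \<subseteq> Cb r b" "P' = pre False ` P" by (auto simp: subset_image_iff)
  show ?thesis
  proof (rule that)
    show "r \<subseteq> {..<length w}" unfolding r_def by auto
    show "P \<subseteq> Cb r b" by (rule P(1))
    show "x' = lift r b P" using x'(1) rr P(2) by (simp add: lift_def)
  qed
qed

lemma lift_inj:
  assumes "P \<subseteq> Cb r b" "P2 \<subseteq> Cb r2 b2" "lift r b P = lift r2 b2 P2"
  shows "r = r2 \<and> b = b2 \<and> P = P2"
proof -
  have e: "rr r b = rr r2 b2" "pre False ` P = pre False ` P2" using assms(3) by (auto simp: lift_def)
  have u: "P \<subseteq> U0" "P2 \<subseteq> U0" using assms(1,2) Cb_U0 by blast+
  have "P = P2" using inj_on_image_eq_iff[OF pre_inj u] e(2) by simp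
  then show ?thesis using rr_inj[OF e(1)] by simp
qed

lemma kgr_liftF:
  assumes "P \<subseteq> Cb r False"
  shows "kgr (Suc n) w' (lift r False P) = kgr n w (r, P - {{xpt}}) + (if {xpt} \<in> P then 1 else -1)"
proof -
  have "kgr (Suc n) w' (lift r False P) = kg (pre False ` Cb r False) (pre False ` P)"
    by (simp add: kgr_kg lift_def circles'_F)
  also have "\<dots> = kg (Cb r False) P"
    by (rule kg_inj[OF pre_inj Cb_U0 assms nt_pre])
  also have "\<dots> = kg (circles n w r) (P - {{xpt}}) + (if {xpt} \<in> P then 1 else -1)"
    unfolding CbF by (rule kg_insert[OF circles_finite sing_xpt_notin nt_xpt]) (use assms CbF in simp)
  finally show ?thesis by (simp add: kgr_kg)
qed

lemma kh_lift:
  assumes "P \<subseteq> Cb r b" "Q \<subseteq> Cb r2 b2"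
  shows "kh_coeff (Suc n) w' (lift r b P) (lift r2 b2 Q) = khc (Cb r b) (Cb r2 b2) P Q"
proof -
  have "kh_coeff (Suc n) w' (lift r b P) (lift r2 b2 Q) =
        khc (pre False ` Cb r b) (pre False ` Cb r2 b2) (pre False ` P) (pre False ` Q)"
    by (simp add: kh_coeff_khc lift_def circles'_F)
  also have "\<dots> = khc (Cb r b) (Cb r2 b2) P Q"
    by (rule khc_inj[OF pre_inj Cb_U0 Cb_U0]) (use assms Cb_U0 in blast)+
  finally show ?thesis .
qed

lemma kh_FF:
  assumes "P \<subseteq> Cb r False" "Q \<subseteq> Cb r2 False"
  shows "kh_coeff (Suc n) w' (lift r False P) (lift r2 False Q) =
     (({xpt} \<in> P \<longleftrightarrow> {xpt} \<in> Q) \<and> kh_coeff n w (r, P - {{xpt}}) (r2, Q - {{xpt}}))"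
proof -
  have "kh_coeff (Suc n) w' (lift r False P) (lift r2 False Q) = khc (Cb r False) (Cb r2 False) P Q"
    by (rule kh_lift[OF assms])
  also have "\<dots> = (({xpt} \<in> P \<longleftrightarrow> {xpt} \<in> Q) \<and> khc (circles n w r) (circles n w r2) (P - {{xpt}}) (Q - {{xpt}}))"
    unfolding CbF by (rule khc_insert[OF sing_xpt_notin sing_xpt_notin])
  finally show ?thesis by (simp add: kh_coeff_khc)
qed

lemma kh_FT:
  assumes "P \<subseteq> Cb r False" "Q \<subseteq> Cb r True"
  shows "kh_coeff (Suc n) w' (lift r False P) (lift r True Q) =
     ((\<forall>C \<in> circles n w r - {Cp r}. C \<in> P \<longleftrightarrow> C \<in> Q) \<and>
      ((Cp r \<in> P \<and> {xpt} \<in> P \<and> insert xpt (Cp r) \<in> Q) \<or>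
       ((Cp r \<in> P) \<noteq> ({xpt} \<in> P) \<and> insert xpt (Cp r) \<notin> Q)))"
proof -
  let ?Cr = "circles n w r" and ?M = "insert xpt (Cp r)"
  have qM: "(q,n) \<in> ?M" using Cp_in(2) by simp
  have M1: "?M \<noteq> {xpt}"
  proof
    assume "?M = {xpt}" with qM have "(q,n) \<in> {xpt}" by simp
    then show False using xpt_ne_qn by simp
  qed
  have M2: "?M \<notin> ?Cr"
  proof
    assume "?M \<in> ?Cr" then have "xpt \<notin> ?M" by (rule xpt_notin_circle)
    then show False by simp
  qed
  have X1: "{xpt} \<noteq> Cp r"
  proof
    assume "{xpt} = Cp r" then have "(q,n) \<in> {xpt}" using Cp_in(2) by simp
    then show False using xpt_ne_qn by simp
  qed
  have X2: "{xpt} \<notin> ?Cr" by (rule sing_xpt_notin)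
  have cp: "Cp r \<in> ?Cr" by (rule Cp_in)
  have E: "insert {xpt} ?Cr \<inter> insert ?M (?Cr - {Cp r}) = ?Cr - {Cp r} \<and>
      insert {xpt} ?Cr - insert ?M (?Cr - {Cp r}) = {{xpt}, Cp r} \<and>
      insert ?M (?Cr - {Cp r}) - insert {xpt} ?Cr = {?M}"
    by (rule set3[OF M1 M2 X2 cp])
  note e1 = conjunct1[OF E] and e2 = conjunct1[OF conjunct2[OF E]] and e3 = conjunct2[OF conjunct2[OF E]]
  have "kh_coeff (Suc n) w' (lift r False P) (lift r True Q) = khc (Cb r False) (Cb r True) P Q"
    by (rule kh_lift[OF assms])
  also have "\<dots> = khc' (?Cr - {Cp r}) {{xpt}, Cp r} {?M} P Q"
    unfolding CbF CbT khc_khc' e1 e2 e3 ..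
  also have "\<dots> = ((\<forall>C \<in> circles n w r - {Cp r}. C \<in> P \<longleftrightarrow> C \<in> Q) \<and>
      ((Cp r \<in> P \<and> {xpt} \<in> P \<and> insert xpt (Cp r) \<in> Q) \<or>
       ((Cp r \<in> P) \<noteq> ({xpt} \<in> P) \<and> insert xpt (Cp r) \<notin> Q)))" unfolding khc'_merge[OF X1] by blast
  finally show ?thesis .
qed

end


lemma khc'_split:
  assumes "m \<noteq> m'"
  shows "khc' I {x} {m, m'} P Q = ((\<forall>C \<in> I. C \<in> P \<longleftrightarrow> C \<in> Q) \<and>
     ((x \<in> P \<and> (m \<in> Q) \<noteq> (m' \<in> Q)) \<or> (x \<notin> P \<and> m \<notin> Q \<and> m' \<notin> Q)))"
proof -
  have s: "\<not> (\<exists>a1 a2 b. a1 \<noteq> a2 \<and> {x} = {a1, a2} \<and> F a1 a2 b)" for F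
    by (metis insertI1 insert_commute singletonD)
  have m: "(\<exists>a b1 b2. b1 \<noteq> b2 \<and> {x} = {a} \<and> {m, m'} = {b1, b2} \<and>
         ((a \<in> P \<and> (b1 \<in> Q) \<noteq> (b2 \<in> Q)) \<or> (a \<notin> P \<and> b1 \<notin> Q \<and> b2 \<notin> Q)))
     = ((x \<in> P \<and> (m \<in> Q) \<noteq> (m' \<in> Q)) \<or> (x \<notin> P \<and> m \<notin> Q \<and> m' \<notin> Q))"
  proof
    assume "\<exists>a b1 b2. b1 \<noteq> b2 \<and> {x} = {a} \<and> {m, m'} = {b1, b2} \<and>
         ((a \<in> P \<and> (b1 \<in> Q) \<noteq> (b2 \<in> Q)) \<or> (a \<notin> P \<and> b1 \<notin> Q \<and> b2 \<notin> Q))"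
    then obtain a b1 b2 where "{x} = {a}" "{m, m'} = {b1, b2}"
         "(a \<in> P \<and> (b1 \<in> Q) \<noteq> (b2 \<in> Q)) \<or> (a \<notin> P \<and> b1 \<notin> Q \<and> b2 \<notin> Q)"
      by (elim exE conjE) (rule that, assumption+)
    then show "(x \<in> P \<and> (m \<in> Q) \<noteq> (m' \<in> Q)) \<or> (x \<notin> P \<and> m \<notin> Q \<and> m' \<notin> Q)"
      unfolding doubleton_eq_iff by auto
  next
    assume "(x \<in> P \<and> (m \<in> Q) \<noteq> (m' \<in> Q)) \<or> (x \<notin> P \<and> m \<notin> Q \<and> m' \<notin> Q)"
    then show "\<exists>a b1 b2. b1 \<noteq> b2 \<and> {x} = {a} \<and> {m, m'} = {b1, b2} \<and>
         ((a \<in> P \<and> (b1 \<in> Q) \<noteq> (b2 \<in> Q)) \<or> (a \<notin> P \<and> b1 \<notin> Q \<and> b2 \<notin> Q))"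
      using assms by (intro exI[of _ x] exI[of _ m] exI[of _ m']) simp
  qed
  show ?thesis unfolding khc'_def m using s by blast
qed

lemma khc'_shape:
  assumes k: "khc' I A B P Q" and a: "a \<in> A" and b: "a2 \<in> B"
  shows "(\<exists>a'. a \<noteq> a' \<and> A = {a, a'} \<and> B = {a2}) \<or> (\<exists>b'. a2 \<noteq> b' \<and> A = {a} \<and> B = {a2, b'})"
proof -
  from k have "(\<exists>a1 a2 b. a1 \<noteq> a2 \<and> A = {a1, a2} \<and> B = {b} \<and>
         ((a1 \<in> P \<and> a2 \<in> P \<and> b \<in> Q) \<or> ((a1 \<in> P) \<noteq> (a2 \<in> P) \<and> b \<notin> Q)))
    \<or> (\<exists>a b1 b2. b1 \<noteq> b2 \<and> A = {a} \<and> B = {b1, b2} \<and>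
         ((a \<in> P \<and> (b1 \<in> Q) \<noteq> (b2 \<in> Q)) \<or> (a \<notin> P \<and> b1 \<notin> Q \<and> b2 \<notin> Q)))"
    unfolding khc'_def by (elim conjE)
  then show ?thesis
  proof
    assume "\<exists>a1 a2 b. a1 \<noteq> a2 \<and> A = {a1, a2} \<and> B = {b} \<and>
         ((a1 \<in> P \<and> a2 \<in> P \<and> b \<in> Q) \<or> ((a1 \<in> P) \<noteq> (a2 \<in> P) \<and> b \<notin> Q))"
    then obtain a1 a1' bb where e: "a1 \<noteq> a1'" "A = {a1, a1'}" "B = {bb}"
      by (elim exE conjE) (rule that, assumption+)
    have "a = a1 \<or> a = a1'" using a e(2) by simp
    moreover have "a2 = bb" using b e(3) by simp
    ultimately have "a \<noteq> (if a = a1 then a1' else a1) \<and> A = {a, if a = a1 then a1' else a1} \<and> B = {a2}"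
      using e by auto
    then show ?thesis by blast
  next
    assume "\<exists>a b1 b2. b1 \<noteq> b2 \<and> A = {a} \<and> B = {b1, b2} \<and>
         ((a \<in> P \<and> (b1 \<in> Q) \<noteq> (b2 \<in> Q)) \<or> (a \<notin> P \<and> b1 \<notin> Q \<and> b2 \<notin> Q))"
    then obtain x b1 b2 where e: "b1 \<noteq> b2" "A = {x}" "B = {b1, b2}"
      by (elim exE conjE) (rule that, assumption+)
    have "a = x" using a e(2) by simp
    moreover have "a2 = b1 \<or> a2 = b2" using b e(3) by simp
    ultimately have "a2 \<noteq> (if a2 = b1 then b2 else b1) \<and> A = {a} \<and> B = {a2, if a2 = b1 then b2 else b1}"
      using e by auto
    then show ?thesis by blast
  qed
qed

lemma ball_minus: "a \<notin> I \<Longrightarrow> (\<forall>C\<in>I. (C \<in> P - {a}) = (C \<in> Q)) = (\<forall>C\<in>I. (C \<in> P) = (C \<in> Q))"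
  by auto
lemma ball_insert: "a \<notin> I \<Longrightarrow> (\<forall>C\<in>I. (C \<in> P) = (C \<in> insert a Q)) = (\<forall>C\<in>I. (C \<in> P) = (C \<in> Q))"
  by auto

text \<open>Moving case: the marked circle a is changed by the crossing and becomes a2.\<close>

lemma khc'_comm1_mov:
  assumes aA: "a \<in> A" and a2B: "a2 \<in> B" and aI: "a \<notin> I" "a \<notin> B" and a2I: "a2 \<notin> I" "a2 \<notin> A"
    and aP: "a \<in> P"
  shows "khc' I A B (P - {a}) Q \<longleftrightarrow> (a2 \<notin> Q \<and> khc' I A B P (insert a2 Q))"
proof
  assume k: "khc' I A B (P - {a}) Q"
  from khc'_shape[OF k aA a2B] show "a2 \<notin> Q \<and> khc' I A B P (insert a2 Q)"
  proof
    assume "\<exists>a'. a \<noteq> a' \<and> A = {a, a'} \<and> B = {a2}"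
    then obtain a' where e: "a \<noteq> a'" "A = {a, a'}" "B = {a2}" by blast
    from k show ?thesis unfolding e khc'_merge[OF e(1)] ball_minus[OF aI(1)] ball_insert[OF a2I(1)]
      using aP e(1) by auto
  next
    assume "\<exists>b'. a2 \<noteq> b' \<and> A = {a} \<and> B = {a2, b'}"
    then obtain b' where e: "a2 \<noteq> b'" "A = {a}" "B = {a2, b'}" by blast
    from k show ?thesis unfolding e khc'_split[OF e(1)] ball_minus[OF aI(1)] ball_insert[OF a2I(1)]
      using aP e(1) by auto
  qed
next
  assume "a2 \<notin> Q \<and> khc' I A B P (insert a2 Q)"
  then have nq: "a2 \<notin> Q" and k: "khc' I A B P (insert a2 Q)" by auto
  from khc'_shape[OF k aA a2B] show "khc' I A B (P - {a}) Q"
  proof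
    assume "\<exists>a'. a \<noteq> a' \<and> A = {a, a'} \<and> B = {a2}"
    then obtain a' where e: "a \<noteq> a'" "A = {a, a'}" "B = {a2}" by blast
    from k show ?thesis unfolding e khc'_merge[OF e(1)] ball_minus[OF aI(1)] ball_insert[OF a2I(1)]
      using aP e(1) nq by auto
  next
    assume "\<exists>b'. a2 \<noteq> b' \<and> A = {a} \<and> B = {a2, b'}"
    then obtain b' where e: "a2 \<noteq> b'" "A = {a}" "B = {a2, b'}" by blast
    from k show ?thesis unfolding e khc'_split[OF e(1)] ball_minus[OF aI(1)] ball_insert[OF a2I(1)]
      using aP e(1) nq by auto
  qed
qed

lemma khc'_comm0_mov:
  assumes aA: "a \<in> A" and a2B: "a2 \<in> B" and aP: "a \<notin> P" and k: "khc' I A B P Q"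
  shows "a2 \<notin> Q"
  using khc'_shape[OF k aA a2B]
proof
  assume "\<exists>a'. a \<noteq> a' \<and> A = {a, a'} \<and> B = {a2}"
  then obtain a' where e: "a \<noteq> a'" "A = {a, a'}" "B = {a2}" by blast
  from k show ?thesis unfolding e khc'_merge[OF e(1)] using aP by auto
next
  assume "\<exists>b'. a2 \<noteq> b' \<and> A = {a} \<and> B = {a2, b'}"
  then obtain b' where e: "a2 \<noteq> b'" "A = {a}" "B = {a2, b'}" by blast
  from k show ?thesis unfolding e khc'_split[OF e(1)] using aP by auto
qed

text \<open>Common case: the marked circle is unchanged.\<close>

lemma khc'_comm1_com:
  assumes aI: "a \<in> I" and aA: "a \<notin> A" "a \<notin> B" and aP: "a \<in> P"
  shows "khc' I A B (P - {a}) Q \<longleftrightarrow> (a \<notin> Q \<and> khc' I A B P (insert a Q))"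
proof -
  have I: "I = insert a (I - {a})" using aI by auto
  have c1: "khc' (I - {a}) A B (P - {a}) Q = khc' (I - {a}) A B P Q"
    by (rule khc'_cong) (use aA in auto)
  have c2: "khc' (I - {a}) A B P (insert a Q) = khc' (I - {a}) A B P Q"
    by (rule khc'_cong) (use aA in auto)
  have K: "khc' I = khc' (insert a (I - {a}))" by (rule arg_cong[OF I])
  show ?thesis unfolding K khc'_insertI c1 c2 using aP by simp
qed

lemma khc'_comm0_com:
  assumes aI: "a \<in> I" and aP: "a \<notin> P" and k: "khc' I A B P Q"
  shows "a \<notin> Q"
  using k aI aP unfolding khc'_def by blast


context stab
begin

lemma Cp_rel: "(Cp r = Cp r2 \<and> Cp r \<in> circles n w r2) \<or>
  (Cp r \<in> circles n w r - circles n w r2 \<and> Cp r2 \<in> circles n w r2 - circles n w r)"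
proof (cases "Cp r \<in> circles n w r2")
  case True
  have "Cp r = Cp r2" by (rule circles_disj[OF True Cp_in(1)[of r2] Cp_in(2)[of r] Cp_in(2)[of r2]])
  then show ?thesis using True by simp
next
  case False
  have "Cp r2 \<notin> circles n w r"
  proof
    assume h: "Cp r2 \<in> circles n w r"
    have "Cp r2 = Cp r" by (rule circles_disj[OF h Cp_in(1)[of r] Cp_in(2)[of r2] Cp_in(2)[of r]])
    then show False using False Cp_in(1)[of r2] by simp
  qed
  then show ?thesis using False Cp_in(1)[of r] Cp_in(1)[of r2] by simp
qed

lemma comm1_kh:
  assumes "Cp r \<in> P"
  shows "kh_coeff n w (r, P - {Cp r}) (r2, Q) \<longleftrightarrow> (Cp r2 \<notin> Q \<and> kh_coeff n w (r, P) (r2, insert (Cp r2) Q))"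
proof -
  let ?I = "circles n w r \<inter> circles n w r2" and ?A = "circles n w r - circles n w r2"
    and ?B = "circles n w r2 - circles n w r"
  have "khc' ?I ?A ?B (P - {Cp r}) Q \<longleftrightarrow> (Cp r2 \<notin> Q \<and> khc' ?I ?A ?B P (insert (Cp r2) Q))"
    using Cp_rel[of r r2]
  proof
    assume h: "Cp r = Cp r2 \<and> Cp r \<in> circles n w r2"
    have "khc' ?I ?A ?B (P - {Cp r}) Q \<longleftrightarrow> (Cp r \<notin> Q \<and> khc' ?I ?A ?B P (insert (Cp r) Q))"
      by (rule khc'_comm1_com) (use assms h Cp_in(1)[of r] in auto)
    then show ?thesis using h by simp
  next
    assume h: "Cp r \<in> circles n w r - circles n w r2 \<and> Cp r2 \<in> circles n w r2 - circles n w r"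
    show ?thesis
      by (rule khc'_comm1_mov) (use h assms in auto)
  qed
  then show ?thesis unfolding kh_coeff_khc khc_khc' fst_conv snd_conv .
qed

lemma comm0_kh:
  assumes "Cp r \<notin> P" "kh_coeff n w (r, P) (r2, Q)"
  shows "Cp r2 \<notin> Q"
  using Cp_rel[of r r2]
proof
  assume h: "Cp r = Cp r2 \<and> Cp r \<in> circles n w r2"
  show ?thesis
    using khc'_comm0_com[of "Cp r" "circles n w r \<inter> circles n w r2" P "circles n w r - circles n w r2"
        "circles n w r2 - circles n w r" Q] assms h Cp_in(1)[of r]
    unfolding kh_coeff_khc khc_khc' fst_conv snd_conv by auto
next
  assume h: "Cp r \<in> circles n w r - circles n w r2 \<and> Cp r2 \<in> circles n w r2 - circles n w r"
  show ?thesis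
    by (rule khc'_comm0_mov[of "Cp r" _ _ _ P "circles n w r \<inter> circles n w r2"])
       (use h assms in \<open>auto simp: kh_coeff_khc khc_khc'\<close>)
qed

lemma gens_insert_Cp: "(r2, insert (Cp r2) Q) \<in> gens n w \<longleftrightarrow> (r2, Q) \<in> gens n w"
  using Cp_in(1)[of r2] by (auto simp: gens_def)

lemma comm1_kd:
  assumes "Cp r \<in> P"
  shows "(r2, Q) \<in> kd n w (r, P - {Cp r}) \<longleftrightarrow> (Cp r2 \<notin> Q \<and> (r2, insert (Cp r2) Q) \<in> kd n w (r, P))"
  unfolding kd_def mem_Collect_eq fst_conv snd_conv gens_insert_Cp comm1_kh[OF assms] by blast

lemma comm0_kd:
  assumes "Cp r \<notin> P" "(r2, Q) \<in> kd n w (r, P)"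
  shows "Cp r2 \<notin> Q"
  using assms(2) comm0_kh[OF assms(1)] unfolding kd_def by auto

end


lemma kd_mono: "z \<in> kd n w x \<Longrightarrow> fst x \<subseteq> fst z"
  unfolding kd_def by auto

lemma kd_gens: "z \<in> kd n w x \<Longrightarrow> z \<in> gens n w"
  unfolding kd_def by auto

lemma kd_chain_gens: "kd_chain n w X \<subseteq> gens n w"
proof
  fix z assume "z \<in> kd_chain n w X"
  then have "odd (card {x \<in> X. z \<in> kd n w x})" by (simp add: kd_chain_def)
  then have "{x \<in> X. z \<in> kd n w x} \<noteq> {}" by (metis card.empty even_zero)
  then show "z \<in> gens n w" using kd_gens by blast
qed

context stab
begin

lemma fst_lift: "fst (lift r b P) = rr r b" by (simp add: lift_def)

lemma kd_liftF_F:
  assumes "r \<subseteq> {..<length w}" "P \<subseteq> Cb r False" "r2 \<subseteq> {..<length w}" "Q \<subseteq> Cb r2 False"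
  shows "lift r2 False Q \<in> kd (Suc n) w' (lift r False P) \<longleftrightarrow>
    (\<exists>c<length w. c \<notin> r \<and> r2 = insert c r) \<and> kh_coeff (Suc n) w' (lift r False P) (lift r2 False Q)"
proof
  assume "lift r2 False Q \<in> kd (Suc n) w' (lift r False P)"
  then obtain c' where c': "c' < Suc (length w)" "c' \<notin> rr r False" "rr r2 False = insert c' (rr r False)"
    and k: "kh_coeff (Suc n) w' (lift r False P) (lift r2 False Q)"
    unfolding kd_def by (auto simp: fst_lift len')
  from c'(1) consider "c' = q" | c where "c < length w" "c' = sh c" using idx_cases by blast
  then show "(\<exists>c<length w. c \<notin> r \<and> r2 = insert c r) \<and> kh_coeff (Suc n) w' (lift r False P) (lift r2 False Q)"
  proof cases
    case 1
    then have "rr r2 False = rr r True" using c'(3) rr_insert_q by simp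
    then show ?thesis using rr_inj by blast
  next
    case 2
    have "c \<notin> r" using c'(2) 2 sh_in_rr by simp
    moreover have "rr r2 False = rr (insert c r) False" using c'(3) 2 rr_insert_sh by simp
    then have "r2 = insert c r" using rr_inj by blast
    ultimately show ?thesis using 2 k by blast
  qed
next
  assume h: "(\<exists>c<length w. c \<notin> r \<and> r2 = insert c r) \<and> kh_coeff (Suc n) w' (lift r False P) (lift r2 False Q)"
  then obtain c where c: "c < length w" "c \<notin> r" "r2 = insert c r" by blast
  have "lift r2 False Q \<in> gens (Suc n) w'" by (rule lift_gens[OF assms(3,4)])
  moreover have "sh c < length w'" "sh c \<notin> fst (lift r False P)"
    "fst (lift r2 False Q) = insert (sh c) (fst (lift r False P))"
    using c sh_lt[OF c(1)] by (auto simp: len' fst_lift sh_in_rr rr_insert_sh)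
  ultimately show "lift r2 False Q \<in> kd (Suc n) w' (lift r False P)"
    unfolding kd_def using h by blast
qed

lemma kd_liftF_T:
  assumes "r \<subseteq> {..<length w}" "P \<subseteq> Cb r False" "r2 \<subseteq> {..<length w}" "Q \<subseteq> Cb r2 True"
  shows "lift r2 True Q \<in> kd (Suc n) w' (lift r False P) \<longleftrightarrow>
    r2 = r \<and> kh_coeff (Suc n) w' (lift r False P) (lift r True Q)"
proof
  assume "lift r2 True Q \<in> kd (Suc n) w' (lift r False P)"
  then obtain c' where c': "c' < Suc (length w)" "c' \<notin> rr r False" "rr r2 True = insert c' (rr r False)"
    and k: "kh_coeff (Suc n) w' (lift r False P) (lift r2 True Q)"
    unfolding kd_def by (auto simp: fst_lift len')
  from c'(1) consider "c' = q" | c where "c < length w" "c' = sh c" using idx_cases by blast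
  then show "r2 = r \<and> kh_coeff (Suc n) w' (lift r False P) (lift r True Q)"
  proof cases
    case 1
    then have "rr r2 True = rr r True" using c'(3) rr_insert_q by simp
    then have "r2 = r" using rr_inj by blast
    then show ?thesis using k by simp
  next
    case 2
    have "rr r2 True = rr (insert c r) False" using c'(3) 2 rr_insert_sh by simp
    then show ?thesis using rr_inj by blast
  qed
next
  assume h: "r2 = r \<and> kh_coeff (Suc n) w' (lift r False P) (lift r True Q)"
  have "lift r2 True Q \<in> gens (Suc n) w'" by (rule lift_gens[OF assms(3,4)])
  moreover have "q < length w'" "q \<notin> fst (lift r False P)"
    "fst (lift r2 True Q) = insert q (fst (lift r False P))"
    using h qL by (auto simp: len' fst_lift q_in_rr rr_insert_q)
  ultimately show "lift r2 True Q \<in> kd (Suc n) w' (lift r False P)"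
    unfolding kd_def using h by blast
qed

lemma kd_liftT_F: "lift r2 False Q \<notin> kd (Suc n) w' (lift r True P)"
proof
  assume "lift r2 False Q \<in> kd (Suc n) w' (lift r True P)"
  then have "rr r True \<subseteq> rr r2 False" using kd_mono by (fastforce simp: fst_lift)
  then show False using q_in_rr by blast
qed

definition L0 :: "kgen \<Rightarrow> kgen" where "L0 y = lift (fst y) False (snd y)"
definition L1 :: "kgen \<Rightarrow> kgen" where "L1 y = lift (fst y) False (insert {xpt} (snd y - {Cp (fst y)}))"

lemma gens_sub: "y \<in> gens n w \<Longrightarrow> fst y \<subseteq> {..<length w} \<and> snd y \<subseteq> circles n w (fst y)"
  by (auto simp: gens_def)

lemma gens_CbF: "y \<in> gens n w \<Longrightarrow> snd y \<subseteq> Cb (fst y) False"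
  using gens_sub[of y] unfolding CbF by blast

lemma gens_L1: "y \<in> gens n w \<Longrightarrow> insert {xpt} (snd y - {Cp (fst y)}) \<subseteq> Cb (fst y) False"
  using gens_sub[of y] unfolding CbF by blast

lemma xpt_notin_gen: "y \<in> gens n w \<Longrightarrow> {xpt} \<notin> snd y"
  using gens_sub sing_xpt_notin by blast

lemma L0_inj: "inj_on L0 (gens n w)"
proof (rule inj_onI)
  fix x y assume "x \<in> gens n w" "y \<in> gens n w" "L0 x = L0 y"
  then have "fst x = fst y \<and> False = False \<and> snd x = snd y"
    unfolding L0_def by (intro lift_inj[OF gens_CbF gens_CbF])
  then show "x = y" by (simp add: prod_eq_iff)
qed

lemma L1_inj: "inj_on L1 {y \<in> gens n w. Cp (fst y) \<in> snd y}"
proof (rule inj_onI)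
  fix x y assume x: "x \<in> {y \<in> gens n w. Cp (fst y) \<in> snd y}" and y: "y \<in> {y \<in> gens n w. Cp (fst y) \<in> snd y}"
    and e: "L1 x = L1 y"
  have xy: "fst x = fst y \<and> False = False \<and> insert {xpt} (snd x - {Cp (fst x)}) = insert {xpt} (snd y - {Cp (fst y)})"
    using e unfolding L1_def by (intro lift_inj[OF gens_L1 gens_L1]) (use x y in auto)
  have nx: "{xpt} \<notin> snd x - {Cp (fst x)}" "{xpt} \<notin> snd y - {Cp (fst y)}" using xpt_notin_gen x y by auto
  have ie: "insert {xpt} (snd x - {Cp (fst x)}) = insert {xpt} (snd y - {Cp (fst y)})"
    using xy by (elim conjE)
  have d: "snd x - {Cp (fst x)} = snd y - {Cp (fst y)}"
    using iffD1[OF insert_ident[OF nx] ie] .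
  have f: "fst x = fst y" using xy by (elim conjE)
  have "snd x = insert (Cp (fst x)) (snd x - {Cp (fst x)})" using x by auto
  also have "\<dots> = insert (Cp (fst y)) (snd y - {Cp (fst y)})" using d f by simp
  also have "\<dots> = snd y" using y by auto
  finally have "snd x = snd y" .
  then show "x = y" using xy by (simp add: prod_eq_iff)
qed

lemma L0_L1_ne: "x \<in> gens n w \<Longrightarrow> y \<in> gens n w \<Longrightarrow> L0 x \<noteq> L1 y"
proof
  assume x: "x \<in> gens n w" and y: "y \<in> gens n w" and e: "L0 x = L1 y"
  have "fst x = fst y \<and> False = False \<and> snd x = insert {xpt} (snd y - {Cp (fst y)})"
    using e unfolding L0_def L1_def by (intro lift_inj[OF gens_CbF[OF x] gens_L1[OF y]])
  then show False using xpt_notin_gen[OF x] by simp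
qed

lemma src_L0:
  assumes Y': "Y' \<subseteq> gens (Suc n) w'" and z: "z \<in> gens n w"
  shows "{y' \<in> Y'. L0 z \<in> kd (Suc n) w' y'} = L0 ` {y \<in> gens n w. L0 y \<in> Y' \<and> z \<in> kd n w y}"
proof (rule set_eqI, rule iffI)
  fix y' assume "y' \<in> {y' \<in> Y'. L0 z \<in> kd (Suc n) w' y'}"
  then have y': "y' \<in> Y'" "L0 z \<in> kd (Suc n) w' y'" by auto
  have yg': "y' \<in> gens (Suc n) w'" using Y' y'(1) by blast
  obtain r b P where rbP: "r \<subseteq> {..<length w}" "P \<subseteq> Cb r b" "y' = lift r b P"
    by (rule gens'_lift[OF yg'])
  have b: "\<not> b"
  proof
    assume b "b"
    then show False using y'(2) rbP kd_liftT_F unfolding L0_def by simp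
  qed
  have zs: "fst z \<subseteq> {..<length w}" "snd z \<subseteq> Cb (fst z) False" using gens_sub[OF z] gens_CbF[OF z] by auto
  have k: "(\<exists>c<length w. c \<notin> r \<and> fst z = insert c r) \<and> kh_coeff (Suc n) w' (lift r False P) (lift (fst z) False (snd z))"
    using y'(2) kd_liftF_F[OF rbP(1) _ zs] rbP b unfolding L0_def by simp
  have k2: "({xpt} \<in> P \<longleftrightarrow> {xpt} \<in> snd z) \<and> kh_coeff n w (r, P - {{xpt}}) (fst z, snd z - {{xpt}})"
    using k kh_FF[of P r "snd z" "fst z"] rbP zs b by simp
  have nP: "{xpt} \<notin> P" using k2 xpt_notin_gen[OF z] by simp
  then have Pc: "P \<subseteq> circles n w r" using rbP(2) b by (auto simp: CbF)
  have yg: "(r, P) \<in> gens n w" using rbP(1) Pc by (simp add: gens_def)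
  have "z \<in> kd n w (r, P)"
    unfolding kd_def using z k k2 nP xpt_notin_gen[OF z] by (auto simp: prod_eq_iff)
  moreover have "L0 (r, P) = y'" using rbP b by (simp add: L0_def)
  ultimately show "y' \<in> L0 ` {y \<in> gens n w. L0 y \<in> Y' \<and> z \<in> kd n w y}" using yg y'(1) by force
next
  fix y' assume "y' \<in> L0 ` {y \<in> gens n w. L0 y \<in> Y' \<and> z \<in> kd n w y}"
  then obtain y where y: "y \<in> gens n w" "L0 y \<in> Y'" "z \<in> kd n w y" "y' = L0 y" by blast
  have ys: "fst y \<subseteq> {..<length w}" "snd y \<subseteq> Cb (fst y) False" using gens_sub[OF y(1)] gens_CbF[OF y(1)] by auto
  have zs: "fst z \<subseteq> {..<length w}" "snd z \<subseteq> Cb (fst z) False" using gens_sub[OF z] gens_CbF[OF z] by auto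
  obtain c where c: "c < length w" "c \<notin> fst y" "fst z = insert c (fst y)" "kh_coeff n w y z"
    using y(3) unfolding kd_def by auto
  have "kh_coeff (Suc n) w' (lift (fst y) False (snd y)) (lift (fst z) False (snd z))"
    using kh_FF[OF ys(2) zs(2)] c(4) xpt_notin_gen[OF y(1)] xpt_notin_gen[OF z] by simp
  then have "L0 z \<in> kd (Suc n) w' (L0 y)"
    unfolding L0_def using kd_liftF_F[OF ys zs] c by blast
  then show "y' \<in> {y' \<in> Y'. L0 z \<in> kd (Suc n) w' y'}" using y by simp
qed

end


lemma psi_gens: "psi w \<in> gens n w" by (auto simp: psi_def gens_def)

lemma mem_kd_chain: "z \<in> kd_chain n w X \<longleftrightarrow> odd (card {x \<in> X. z \<in> kd n w x})"
  by (simp add: kd_chain_def)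

context stab
begin

lemma psi_w': "psi w' = L0 (psi w)"
proof -
  have "{j. j < length w' \<and> \<not> snd (w' ! j)} = sh ` {j. j < length w \<and> \<not> snd (w ! j)}"
  proof (rule set_eqI, rule iffI)
    fix x assume "x \<in> {j. j < length w' \<and> \<not> snd (w' ! j)}"
    then have x: "x < Suc (length w)" "\<not> snd (w' ! x)" by (auto simp: len')
    from x(1) consider "x = q" | j where "j < length w" "x = sh j" using idx_cases by blast
    then show "x \<in> sh ` {j. j < length w \<and> \<not> snd (w ! j)}"
    proof cases
      case 1 then show ?thesis using x(2) by (simp add: nth_q)
    next
      case 2 then show ?thesis using x(2) by (auto simp: nth_sh)
    qed
  next
    fix x assume "x \<in> sh ` {j. j < length w \<and> \<not> snd (w ! j)}"
    then obtain j where "j < length w" "\<not> snd (w ! j)" "x = sh j" by blast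
    then show "x \<in> {j. j < length w' \<and> \<not> snd (w' ! j)}" using sh_lt by (auto simp: nth_sh len')
  qed
  then show ?thesis by (simp add: psi_def L0_def lift_def rr_def)
qed

lemma L0_gens': "y \<in> gens n w \<Longrightarrow> L0 y \<in> gens (Suc n) w'"
  unfolding L0_def by (rule lift_gens) (use gens_sub[of y] gens_CbF[of y] in auto)

lemma L1_gens': "y \<in> gens n w \<Longrightarrow> L1 y \<in> gens (Suc n) w'"
  unfolding L1_def by (rule lift_gens) (use gens_sub[of y] gens_L1[of y] in auto)

lemma kgr_L0: "y \<in> gens n w \<Longrightarrow> kgr (Suc n) w' (L0 y) = kgr n w y - 1"
  unfolding L0_def using kgr_liftF[OF gens_CbF[of y]] xpt_notin_gen[of y] by simp

lemma kgr_L1: "y \<in> gens n w \<Longrightarrow> Cp (fst y) \<in> snd y \<Longrightarrow>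
   kgr (Suc n) w' (L1 y) = kgr n w y - (if nontrivial (Cp (fst y)) then 2 else 0) + 1"
proof -
  assume y: "y \<in> gens n w" "Cp (fst y) \<in> snd y"
  have nx: "{xpt} \<notin> snd y - {Cp (fst y)}" using xpt_notin_gen[OF y(1)] by blast
  have "kgr (Suc n) w' (L1 y) = kgr n w (fst y, snd y - {Cp (fst y)}) + 1"
    unfolding L1_def using kgr_liftF[OF gens_L1[OF y(1)]] nx by simp
  also have "kgr n w (fst y, snd y - {Cp (fst y)}) = kgr n w y - (if nontrivial (Cp (fst y)) then 2 else 0)"
    unfolding kgr_kg fst_conv snd_conv
    by (rule kg_remove[OF circles_finite y(2)]) (use gens_sub[OF y(1)] in auto)
  finally show ?thesis .
qed

lemma kd_pt:
  assumes y: "y \<in> gens n w" and z: "z \<in> gens n w"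
  shows "lift (fst z) False (if eb then insert {xpt} (snd z) else snd z) \<in>
           kd (Suc n) w' (lift (fst y) False (if ea then insert {xpt} (snd y) else snd y))
         \<longleftrightarrow> (ea = eb \<and> z \<in> kd n w y)"
proof -
  let ?P = "if ea then insert {xpt} (snd y) else snd y" and ?Q = "if eb then insert {xpt} (snd z) else snd z"
  have Ps: "?P \<subseteq> Cb (fst y) False" "?Q \<subseteq> Cb (fst z) False"
    using gens_CbF[OF y] gens_CbF[OF z] by (auto simp: CbF)
  have nx: "{xpt} \<notin> snd y" "{xpt} \<notin> snd z" using xpt_notin_gen y z by auto
  have m1: "?P - {{xpt}} = snd y" "?Q - {{xpt}} = snd z" using nx by auto
  have m2: "({xpt} \<in> ?P) = ea" "({xpt} \<in> ?Q) = eb" using nx by auto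
  have "lift (fst z) False ?Q \<in> kd (Suc n) w' (lift (fst y) False ?P) \<longleftrightarrow>
      (\<exists>c<length w. c \<notin> fst y \<and> fst z = insert c (fst y)) \<and> (ea = eb) \<and> kh_coeff n w y z"
    unfolding kd_liftF_F[OF conjunct1[OF gens_sub[OF y]] Ps(1) conjunct1[OF gens_sub[OF z]] Ps(2)]
      kh_FF[OF Ps] m1 m2 by simp
  also have "\<dots> \<longleftrightarrow> (ea = eb \<and> z \<in> kd n w y)"
    unfolding kd_def using z by auto
  finally show ?thesis .
qed

lemma L0_eq: "L0 y = lift (fst y) False (if False then insert {xpt} (snd y) else snd y)"
  by (simp add: L0_def)

lemma lower_chain:
  assumes Y': "Y' \<in> filt (Suc n) w' i" and d: "kd_chain (Suc n) w' Y' = {psi w'}"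
  shows "\<exists>Y \<in> filt n w (i + 1). kd_chain n w Y = {psi w}"
proof -
  define Y where "Y = {y \<in> gens n w. L0 y \<in> Y'}"
  have Y'g: "Y' \<subseteq> gens (Suc n) w'" "finite Y'" using Y' by (auto simp: filt_def)
  have Yg: "Y \<subseteq> gens n w" by (auto simp: Y_def)
  have injY: "inj_on L0 Y" using inj_on_subset[OF L0_inj Yg] .
  have "L0 ` Y \<subseteq> Y'" by (auto simp: Y_def)
  then have finY: "finite Y" using Y'g(2) injY finite_image_iff finite_subset by metis
  have kY: "\<forall>y\<in>Y. kgr n w y \<le> i + 1"
  proof
    fix y assume y: "y \<in> Y"
    then have "L0 y \<in> Y'" "y \<in> gens n w" by (auto simp: Y_def)
    then have "kgr (Suc n) w' (L0 y) \<le> i" using Y' by (auto simp: filt_def)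
    then show "kgr n w y \<le> i + 1" using kgr_L0[OF \<open>y \<in> gens n w\<close>] by simp
  qed
  have "Y \<in> filt n w (i + 1)" using finY Yg kY by (simp add: filt_def)
  moreover have "kd_chain n w Y = {psi w}"
  proof (rule set_eqI)
    fix z
    show "z \<in> kd_chain n w Y \<longleftrightarrow> z \<in> {psi w}"
    proof (cases "z \<in> gens n w")
      case False
      then show ?thesis using kd_chain_gens psi_gens by blast
    next
      case True
      have "{y \<in> Y. z \<in> kd n w y} = {y \<in> gens n w. L0 y \<in> Y' \<and> z \<in> kd n w y}" by (auto simp: Y_def)
      then have "card {y \<in> Y. z \<in> kd n w y} = card (L0 ` {y \<in> gens n w. L0 y \<in> Y' \<and> z \<in> kd n w y})"
        using card_image[OF inj_on_subset[OF L0_inj]] by (metis (no_types, lifting) mem_Collect_eq subsetI)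
      also have "\<dots> = card {y' \<in> Y'. L0 z \<in> kd (Suc n) w' y'}" using src_L0[OF Y'g(1) True] by simp
      finally have "z \<in> kd_chain n w Y \<longleftrightarrow> L0 z \<in> kd_chain (Suc n) w' Y'" by (simp add: mem_kd_chain)
      also have "\<dots> \<longleftrightarrow> L0 z = L0 (psi w)" using d psi_w' by simp
      also have "\<dots> \<longleftrightarrow> z = psi w" using inj_onD[OF L0_inj _ True psi_gens] by auto
      finally show ?thesis by simp
    qed
  qed
  ultimately show ?thesis by blast
qed


lemma img_filter: "{y \<in> f1 ` A \<union> f2 ` B. P y} = f1 ` {a \<in> A. P (f1 a)} \<union> f2 ` {b \<in> B. P (f2 b)}"
  by auto

lemma L1_eq: "Cp (fst y) \<in> snd y \<Longrightarrow>
   L1 y = lift (fst (fst y, snd y - {Cp (fst y)})) False (if True then insert {xpt} (snd (fst y, snd y - {Cp (fst y)})) else snd (fst y, snd y - {Cp (fst y)}))"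
  by (simp add: L1_def)

lemma xact_gens: "y \<in> gens n w \<Longrightarrow> (fst y, snd y - {Cp (fst y)}) \<in> gens n w"
  by (auto simp: gens_def)

lemma kh_FT_L0:
  assumes yg: "y \<in> gens n w" and QT: "Q \<subseteq> Cb (fst y) True"
  shows "kh_coeff (Suc n) w' (L0 y) (lift (fst y) True Q) \<longleftrightarrow>
    ((\<forall>C \<in> circles n w (fst y) - {Cp (fst y)}. C \<in> snd y \<longleftrightarrow> C \<in> Q) \<and> Cp (fst y) \<in> snd y \<and> insert xpt (Cp (fst y)) \<notin> Q)"
proof -
  have nx: "{xpt} \<notin> snd y" using xpt_notin_gen[OF yg] .
  show ?thesis unfolding L0_def kh_FT[OF gens_CbF[OF yg] QT] using nx by blast
qed

lemma kh_FT_L1: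
  assumes yg: "y \<in> gens n w" and cp: "Cp (fst y) \<in> snd y" and QT: "Q \<subseteq> Cb (fst y) True"
  shows "kh_coeff (Suc n) w' (L1 y) (lift (fst y) True Q) \<longleftrightarrow>
    ((\<forall>C \<in> circles n w (fst y) - {Cp (fst y)}. C \<in> snd y \<longleftrightarrow> C \<in> Q) \<and> insert xpt (Cp (fst y)) \<notin> Q)"
proof -
  let ?P = "insert {xpt} (snd y - {Cp (fst y)})"
  have ne: "Cp (fst y) \<noteq> {xpt}" using Cp_in(2)[of "fst y"] xpt_ne_qn by auto
  have h1: "Cp (fst y) \<notin> ?P" "{xpt} \<in> ?P" using ne by auto
  have h2: "(\<forall>C \<in> circles n w (fst y) - {Cp (fst y)}. C \<in> ?P \<longleftrightarrow> C \<in> Q) \<longleftrightarrow>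
        (\<forall>C \<in> circles n w (fst y) - {Cp (fst y)}. C \<in> snd y \<longleftrightarrow> C \<in> Q)"
  proof (rule ball_cong[OF refl])
    fix C assume C: "C \<in> circles n w (fst y) - {Cp (fst y)}"
    have "C \<noteq> {xpt}" using C sing_xpt_notin[of "fst y"] by (metis DiffD1)
    moreover have "C \<noteq> Cp (fst y)" using C by simp
    ultimately show "(C \<in> ?P \<longleftrightarrow> C \<in> Q) \<longleftrightarrow> (C \<in> snd y \<longleftrightarrow> C \<in> Q)" by simp
  qed
  show ?thesis unfolding L1_def kh_FT[OF gens_L1[OF yg] QT] h2 using h1 by simp
qed

lemma upper_chain:
  assumes Y: "Y \<in> filt n w i" and d: "kd_chain n w Y = {psi w}"
  shows "\<exists>Y' \<in> filt (Suc n) w' (i + 1). kd_chain (Suc n) w' Y' = {psi w'}"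
proof -
  define Yp where "Yp = {y \<in> Y. Cp (fst y) \<in> snd y}"
  define Y' where "Y' = L0 ` Y \<union> L1 ` Yp"
  have Yg: "Y \<subseteq> gens n w" "finite Y" and kY: "\<forall>y\<in>Y. kgr n w y \<le> i" using Y by (auto simp: filt_def)
  have Ypg: "Yp \<subseteq> Y" "finite Yp" using Yg by (auto simp: Yp_def)
  have injL0: "inj_on L0 Y" using inj_on_subset[OF L0_inj Yg(1)] .
  have injL1: "inj_on L1 Yp" by (rule inj_on_subset[OF L1_inj]) (use Yg in \<open>auto simp: Yp_def\<close>)
  have Y'g: "Y' \<subseteq> gens (Suc n) w'" using L0_gens' L1_gens' Yg Ypg by (auto simp: Y'_def)
  have finY': "finite Y'" using Yg Ypg by (simp add: Y'_def)
  have kY': "\<forall>y'\<in>Y'. kgr (Suc n) w' y' \<le> i + 1"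
  proof
    fix y' assume "y' \<in> Y'"
    then consider y where "y \<in> Y" "y' = L0 y" | y where "y \<in> Yp" "y' = L1 y" by (auto simp: Y'_def)
    then show "kgr (Suc n) w' y' \<le> i + 1"
    proof cases
      case 1
      then have "y \<in> gens n w" "kgr n w y \<le> i" using Yg kY by auto
      then show ?thesis using kgr_L0[of y] 1 by simp
    next
      case 2
      then have "y \<in> gens n w" "Cp (fst y) \<in> snd y" "kgr n w y \<le> i" using Yg kY by (auto simp: Yp_def)
      then show ?thesis using kgr_L1[of y] 2 by auto
    qed
  qed
  have Y'f: "Y' \<in> filt (Suc n) w' (i + 1)" using finY' Y'g kY' by (simp add: filt_def)
  have psi': "psi w' = lift (fst (psi w)) False {}" using psi_w' by (simp add: L0_def psi_def)
  have dis: "L0 ` A \<inter> L1 ` B = {}" if "A \<subseteq> gens n w" "B \<subseteq> gens n w" for A B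
    using L0_L1_ne that by blast
  have "kd_chain (Suc n) w' Y' = {psi w'}"
  proof (rule set_eqI)
    fix z'
    show "z' \<in> kd_chain (Suc n) w' Y' \<longleftrightarrow> z' \<in> {psi w'}"
    proof (cases "z' \<in> gens (Suc n) w'")
      case False
      have "psi w' \<in> gens (Suc n) w'" using psi_w' L0_gens' psi_gens by simp
      then show ?thesis using kd_chain_gens False by blast
    next
      case True
      obtain r2 b2 Q where rbQ: "r2 \<subseteq> {..<length w}" "Q \<subseteq> Cb r2 b2" "z' = lift r2 b2 Q"
        by (rule gens'_lift[OF True])
      have src: "{y' \<in> Y'. z' \<in> kd (Suc n) w' y'} =
          L0 ` {y \<in> Y. z' \<in> kd (Suc n) w' (L0 y)} \<union> L1 ` {y \<in> Yp. z' \<in> kd (Suc n) w' (L1 y)}"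
        unfolding Y'_def by (rule img_filter[where P="\<lambda>y'. z' \<in> kd (Suc n) w' y'"])
      have card_src: "card {y' \<in> Y'. z' \<in> kd (Suc n) w' y'} =
          card {y \<in> Y. z' \<in> kd (Suc n) w' (L0 y)} + card {y \<in> Yp. z' \<in> kd (Suc n) w' (L1 y)}"
      proof -
        have "card (L0 ` {y \<in> Y. z' \<in> kd (Suc n) w' (L0 y)} \<union> L1 ` {y \<in> Yp. z' \<in> kd (Suc n) w' (L1 y)})
          = card (L0 ` {y \<in> Y. z' \<in> kd (Suc n) w' (L0 y)}) + card (L1 ` {y \<in> Yp. z' \<in> kd (Suc n) w' (L1 y)})"
        proof (rule card_Un_disjoint)
          show "finite (L0 ` {y \<in> Y. z' \<in> kd (Suc n) w' (L0 y)})" using Yg by simp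
          show "finite (L1 ` {y \<in> Yp. z' \<in> kd (Suc n) w' (L1 y)})" using Ypg by simp
          show "L0 ` {y \<in> Y. z' \<in> kd (Suc n) w' (L0 y)} \<inter> L1 ` {y \<in> Yp. z' \<in> kd (Suc n) w' (L1 y)} = {}"
            by (rule dis) (use Yg Ypg in auto)
        qed
        also have "card (L0 ` {y \<in> Y. z' \<in> kd (Suc n) w' (L0 y)}) = card {y \<in> Y. z' \<in> kd (Suc n) w' (L0 y)}"
          by (rule card_image, rule inj_on_subset[OF injL0]) auto
        also have "card (L1 ` {y \<in> Yp. z' \<in> kd (Suc n) w' (L1 y)}) = card {y \<in> Yp. z' \<in> kd (Suc n) w' (L1 y)}"
          by (rule card_image, rule inj_on_subset[OF injL1]) auto
        finally show ?thesis using src by simp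
      qed
      show ?thesis
      proof (cases b2)
        case False
        define Q0 where "Q0 = Q - {{xpt}}"
        define eb where "eb = ({xpt} \<in> Q)"
        define z0 where "z0 = (r2, Q0)"
        have z0g: "z0 \<in> gens n w" using rbQ False by (auto simp: z0_def Q0_def gens_def CbF)
        have z'eq: "z' = lift (fst z0) False (if eb then insert {xpt} (snd z0) else snd z0)"
          using rbQ False by (auto simp: z0_def Q0_def eb_def insert_absorb)
        have s0: "{y \<in> Y. z' \<in> kd (Suc n) w' (L0 y)} = {y \<in> Y. \<not> eb \<and> z0 \<in> kd n w y}"
          unfolding z'eq L0_eq using kd_pt[OF _ z0g, of _ eb False] Yg by auto
        have s1: "{y \<in> Yp. z' \<in> kd (Suc n) w' (L1 y)} =
            {y \<in> Yp. eb \<and> z0 \<in> kd n w (fst y, snd y - {Cp (fst y)})}"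
        proof -
          have "y \<in> Yp \<Longrightarrow> z' \<in> kd (Suc n) w' (L1 y) \<longleftrightarrow> eb \<and> z0 \<in> kd n w (fst y, snd y - {Cp (fst y)})" for y
          proof -
            assume y: "y \<in> Yp"
            then have yg: "y \<in> gens n w" "Cp (fst y) \<in> snd y" using Yg by (auto simp: Yp_def)
            show ?thesis unfolding z'eq L1_eq[OF yg(2)]
              using kd_pt[OF xact_gens[OF yg(1)] z0g, of eb True] by auto
          qed
          then show ?thesis by auto
        qed
        show ?thesis
        proof (cases eb)
          case False
          have c: "card {y' \<in> Y'. z' \<in> kd (Suc n) w' y'} = card {y \<in> Y. z0 \<in> kd n w y}"
            using card_src s0 s1 False by simp
          have "z' \<in> kd_chain (Suc n) w' Y' \<longleftrightarrow> z0 \<in> kd_chain n w Y" by (simp add: mem_kd_chain c)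
          also have "\<dots> \<longleftrightarrow> z0 = psi w" using d by simp
          also have "\<dots> \<longleftrightarrow> L0 z0 = L0 (psi w)" using inj_onD[OF L0_inj _ z0g psi_gens] by auto
          also have "L0 z0 = z'" using z'eq False by (simp add: L0_def)
          finally show ?thesis using psi_w' by simp
        next
          case True
          define zh where "zh = (r2, insert (Cp r2) Q0)"
          have zhne: "zh \<noteq> psi w" by (simp add: zh_def psi_def)
          have c: "card {y' \<in> Y'. z' \<in> kd (Suc n) w' y'} = card {y \<in> Yp. z0 \<in> kd n w (fst y, snd y - {Cp (fst y)})}"
            using card_src s0 s1 True by simp
          have ev: "even (card {y \<in> Yp. z0 \<in> kd n w (fst y, snd y - {Cp (fst y)})})"
          proof (cases "Cp r2 \<in> Q0")
            case True
            have E0: "{y \<in> Yp. z0 \<in> kd n w (fst y, snd y - {Cp (fst y)})} = {}"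
            proof -
              have "z0 \<notin> kd n w (fst y, snd y - {Cp (fst y)})" if "y \<in> Yp" for y
              proof -
                have "Cp (fst y) \<in> snd y" using that by (simp add: Yp_def)
                then show ?thesis using comm1_kd[of "fst y" "snd y" r2 Q0] True by (simp add: z0_def)
              qed
              then show ?thesis by blast
            qed
            show ?thesis unfolding E0 by simp
          next
            case nQ: False
            have e1: "{y \<in> Yp. z0 \<in> kd n w (fst y, snd y - {Cp (fst y)})} = {y \<in> Y. zh \<in> kd n w y}"
            proof (rule set_eqI, rule iffI)
              fix y assume "y \<in> {y \<in> Yp. z0 \<in> kd n w (fst y, snd y - {Cp (fst y)})}"
              then have y: "y \<in> Yp" "(r2, Q0) \<in> kd n w (fst y, snd y - {Cp (fst y)})" by (auto simp: z0_def)
              have "Cp (fst y) \<in> snd y" using y(1) by (simp add: Yp_def)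
              then have "zh \<in> kd n w (fst y, snd y)"
                using comm1_kd[of "fst y" "snd y" r2 Q0] y(2) by (simp add: zh_def)
              then show "y \<in> {y \<in> Y. zh \<in> kd n w y}" using y(1) by (simp add: Yp_def)
            next
              fix y assume "y \<in> {y \<in> Y. zh \<in> kd n w y}"
              then have y: "y \<in> Y" "zh \<in> kd n w y" by auto
              have cp: "Cp (fst y) \<in> snd y"
              proof (rule ccontr)
                assume "Cp (fst y) \<notin> snd y"
                then have "Cp r2 \<notin> insert (Cp r2) Q0"
                  using comm0_kd[of "fst y" "snd y" r2 "insert (Cp r2) Q0"] y(2) by (simp add: zh_def)
                then show False by simp
              qed
              have "z0 \<in> kd n w (fst y, snd y - {Cp (fst y)})"
                using comm1_kd[OF cp, of r2 Q0] y(2) nQ by (simp add: zh_def z0_def)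
              then show "y \<in> {y \<in> Yp. z0 \<in> kd n w (fst y, snd y - {Cp (fst y)})}"
                using y(1) cp by (simp add: Yp_def)
            qed
            have "\<not> odd (card {y \<in> Y. zh \<in> kd n w y})"
              using d zhne by (simp add: mem_kd_chain[symmetric])
            then show ?thesis using e1 by simp
          qed
          have "z' \<noteq> psi w'"
          proof
            assume e: "z' = psi w'"
            have "Q \<subseteq> Cb r2 False" using rbQ False by simp
            moreover have "{} \<subseteq> Cb (fst (psi w)) False" by simp
            ultimately have "Q = {}" using lift_inj e psi' rbQ(3) False by metis
            then show False using True by (simp add: eb_def)
          qed
          then show ?thesis using c ev by (simp add: mem_kd_chain)
        qed
      next
        case True
        let ?M = "insert xpt (Cp r2)"
        define Phi where "Phi P = ((\<forall>C \<in> circles n w r2 - {Cp r2}. C \<in> P \<longleftrightarrow> C \<in> Q) \<and> Cp r2 \<in> P \<and> ?M \<notin> Q)" for P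
        define S where "S = {y \<in> Y. fst y = r2 \<and> Phi (snd y)}"
        have QT: "Q \<subseteq> Cb r2 True" using rbQ True by simp
        have z'eq: "z' = lift r2 True Q" using rbQ True by simp
        have s0: "{y \<in> Y. z' \<in> kd (Suc n) w' (L0 y)} = S"
        proof -
          have "z' \<in> kd (Suc n) w' (L0 y) \<longleftrightarrow> fst y = r2 \<and> Phi (snd y)" if "y \<in> Y" for y
          proof -
            have yg: "y \<in> gens n w" using that Yg by auto
            have nx: "{xpt} \<notin> snd y" using xpt_notin_gen[OF yg] .
            have "z' \<in> kd (Suc n) w' (L0 y) \<longleftrightarrow> r2 = fst y \<and> kh_coeff (Suc n) w' (lift (fst y) False (snd y)) (lift (fst y) True Q)"
              unfolding z'eq L0_def
              by (rule kd_liftF_T[OF conjunct1[OF gens_sub[OF yg]] gens_CbF[OF yg] rbQ(1) QT])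
            also have "\<dots> \<longleftrightarrow> fst y = r2 \<and> Phi (snd y)"
            proof (cases "fst y = r2")
              case True
              have "kh_coeff (Suc n) w' (L0 y) (lift (fst y) True Q) \<longleftrightarrow> Phi (snd y)"
                unfolding kh_FT_L0[OF yg QT[folded True]] Phi_def using True by simp
              then show ?thesis using True by (simp add: L0_def)
            qed auto
            finally show ?thesis .
          qed
          then show ?thesis unfolding S_def by auto
        qed
        have s1: "{y \<in> Yp. z' \<in> kd (Suc n) w' (L1 y)} = S"
        proof -
          have "z' \<in> kd (Suc n) w' (L1 y) \<longleftrightarrow> fst y = r2 \<and> Phi (snd y)" if "y \<in> Yp" for y
          proof -
            have yg: "y \<in> gens n w" and cp: "Cp (fst y) \<in> snd y" using that Yg by (auto simp: Yp_def)
            have nx: "{xpt} \<notin> snd y" using xpt_notin_gen[OF yg] .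
            have "z' \<in> kd (Suc n) w' (L1 y) \<longleftrightarrow> r2 = fst y \<and> kh_coeff (Suc n) w' (lift (fst y) False (insert {xpt} (snd y - {Cp (fst y)}))) (lift (fst y) True Q)"
              unfolding z'eq L1_def
              by (rule kd_liftF_T[OF conjunct1[OF gens_sub[OF yg]] gens_L1[OF yg] rbQ(1) QT])
            also have "\<dots> \<longleftrightarrow> fst y = r2 \<and> Phi (snd y)"
            proof (cases "fst y = r2")
              case True
              have "kh_coeff (Suc n) w' (L1 y) (lift (fst y) True Q) \<longleftrightarrow> Phi (snd y)"
                unfolding kh_FT_L1[OF yg cp QT[folded True]] Phi_def using True cp by simp
              then show ?thesis using True by (simp add: L1_def)
            qed auto
            finally show ?thesis .
          qed
          moreover have "S \<subseteq> Yp" by (auto simp: S_def Yp_def Phi_def)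
          ultimately show ?thesis unfolding S_def using Ypg(1) by auto
        qed
        have c: "card {y' \<in> Y'. z' \<in> kd (Suc n) w' y'} = 2 * card S" using card_src s0 s1 by simp
        have "z' \<noteq> psi w'"
        proof
          assume "z' = psi w'"
          then have "rr r2 True = rr (fst (psi w)) False" using z'eq psi' by (simp add: lift_def)
          then show False using rr_inj by blast
        qed
        then show ?thesis using c by (simp add: mem_kd_chain)
      qed
    qed
  qed
  then show ?thesis using Y'f by blast
qed

end


lemma least_int:
  fixes P :: "int \<Rightarrow> bool"
  assumes Pk: "P k" and lb: "\<And>i. P i \<Longrightarrow> b \<le> i"
  shows "P (LEAST i. P i) \<and> (LEAST i. P i) \<le> k"
proof -
  define f where "f t = P (b + int t)" for t :: nat
  have fk: "f (nat (k - b))" using Pk lb[OF Pk] by (simp add: f_def)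
  define m where "m = b + int (LEAST t. f t)"
  have Pm: "P m" using LeastI[of f, OF fk] by (simp add: m_def f_def)
  have mle: "m \<le> y" if "P y" for y
  proof -
    have "f (nat (y - b))" using that lb[OF that] by (simp add: f_def)
    then have "(LEAST t. f t) \<le> nat (y - b)" by (rule Least_le)
    then show ?thesis using lb[OF that] by (simp add: m_def)
  qed
  have "(LEAST i. P i) = m" by (rule Least_equality[of P m, OF Pm mle])
  then show ?thesis using Pm mle[OF Pk] by simp
qed

lemma kgr_lb: "x \<in> gens n w \<Longrightarrow> - int (card (segs n w)) \<le> kgr n w x"
proof -
  assume x: "x \<in> gens n w"
  have "card {C \<in> circles n w (fst x) - snd x. nontrivial C} \<le> card (circles n w (fst x))"
    by (rule card_mono[OF circles_finite]) auto
  also have "card (circles n w (fst x)) \<le> card (segs n w)"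
  proof -
    have "circles n w (fst x) = (\<lambda>y. ccomp (edges n w (fst x)) y) ` segs n w" unfolding comp_circles_eq by auto
    then show ?thesis by (simp add: card_image_le segs_finite)
  qed
  finally show ?thesis unfolding kgr_def by simp
qed

lemma E_lb:
  assumes "X \<in> filt n w i" "kd_chain n w X = {psi w}"
  shows "- int (card (segs n w)) \<le> i"
proof -
  have "X \<noteq> {}" using assms(2) by (auto simp: kd_chain_def)
  then obtain x where "x \<in> X" by blast
  then have "x \<in> gens n w" "kgr n w x \<le> i" using assms(1) by (auto simp: filt_def)
  then show ?thesis using kgr_lb[of x n w] by simp
qed

lemma kappa_le:
  assumes "X \<in> filt n w i" "kd_chain n w X = {psi w}"
  shows "kappa n w \<le> ereal (real_of_int (int n + i))"
proof -
  let ?P = "\<lambda>i. \<exists>X \<in> filt n w i. kd_chain n w X = {psi w}"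
  have "?P i" using assms by blast
  have "(LEAST i. ?P i) \<le> i"
    using least_int[of ?P i "- int (card (segs n w))"] \<open>?P i\<close> E_lb by blast
  then show ?thesis unfolding kappa_def using \<open>?P i\<close> by auto
qed

lemma kappa_least:
  assumes "\<exists>i. \<exists>X \<in> filt n w i. kd_chain n w X = {psi w}"
  obtains i X where "X \<in> filt n w i" "kd_chain n w X = {psi w}" "kappa n w = ereal (real_of_int (int n + i))"
proof -
  let ?P = "\<lambda>i. \<exists>X \<in> filt n w i. kd_chain n w X = {psi w}"
  obtain k where "?P k" using assms by blast
  then have "?P (LEAST i. ?P i)"
    using least_int[of ?P k "- int (card (segs n w))"] E_lb by blast
  then obtain X where "X \<in> filt n w (LEAST i. ?P i)" "kd_chain n w X = {psi w}" by blast
  moreover have "kappa n w = ereal (real_of_int (int n + (LEAST i. ?P i)))"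
    unfolding kappa_def using assms by simp
  ultimately show ?thesis by (rule that)
qed

theorem mainTheorem5:
  assumes "braid_word n w"
    and "innermost_point n w q"
  shows "kappa n w \<le> kappa (Suc n) (stabilize n w q)
         \<and> kappa (Suc n) (stabilize n w q) \<le> kappa n w + 2"
proof -
  have qL: "fst q \<le> length w" using assms(2) by (auto simp: innermost_point_def segs_def)
  interpret S: stab n w "fst q" using assms(1) qL by unfold_locales
  have w'eq: "stabilize n w q = S.w'" by (simp add: stabilize_def S.w'_def)
  have part1: "kappa n w \<le> kappa (Suc n) S.w'"
  proof (cases "\<exists>i. \<exists>X \<in> filt (Suc n) S.w' i. kd_chain (Suc n) S.w' X = {psi S.w'}")
    case False
    then show ?thesis by (simp add: kappa_def)
  next
    case True
    then obtain i X where X: "X \<in> filt (Suc n) S.w' i" "kd_chain (Suc n) S.w' X = {psi S.w'}"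
      and k: "kappa (Suc n) S.w' = ereal (real_of_int (int (Suc n) + i))"
      by (rule kappa_least)
    obtain Y where Y: "Y \<in> filt n w (i + 1)" "kd_chain n w Y = {psi w}"
      using S.lower_chain[OF X] by blast
    have "kappa n w \<le> ereal (real_of_int (int n + (i + 1)))" by (rule kappa_le[OF Y])
    also have "\<dots> = kappa (Suc n) S.w'" using k by simp
    finally show ?thesis .
  qed
  have part2: "kappa (Suc n) S.w' \<le> kappa n w + 2"
  proof (cases "\<exists>i. \<exists>X \<in> filt n w i. kd_chain n w X = {psi w}")
    case False
    then show ?thesis by (simp add: kappa_def)
  next
    case True
    then obtain i Y where Y: "Y \<in> filt n w i" "kd_chain n w Y = {psi w}"
      and k: "kappa n w = ereal (real_of_int (int n + i))"
      by (rule kappa_least)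
    obtain X where X: "X \<in> filt (Suc n) S.w' (i + 1)" "kd_chain (Suc n) S.w' X = {psi S.w'}"
      using S.upper_chain[OF Y] by blast
    have "kappa (Suc n) S.w' \<le> ereal (real_of_int (int (Suc n) + (i + 1)))" by (rule kappa_le[OF X])
    also have "\<dots> = kappa n w + 2" using k by simp
    finally show ?thesis .
  qed
  show ?thesis using part1 part2 w'eq by simp
qed


end
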